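(* Let $\mathcal{X}=\mathbb{R}^{m\times n}_{\le r}$, $\mathcal{M}=\{(X,\mathcal{S})\in\mathbb{R}^{m\times n}\times\mathrm{Gr}(n,n-r): \mathcal{S}\subseteq\ker X\}$ and $\varphi(X,\mathcal{S})=X$. Then $\varphi$ satisfies "local $\Rightarrow$ local" at $(X,\mathcal{S})$ if and only if $\mathrm{rank}(X)=r$; the same holds for "1 $\Rightarrow$ 1"; and $\varphi$ satisfies "2 $\Rightarrow$ 1" at every point of $\mathcal{M}$.
   Context: $\mathbb{R}^{m\times n}_{\le r}$ is the set of $m\times n$ real matrices of rank at most $r$; $\mathrm{Gr}(n,n-r)$ is the Grassmann manifold of $(n-r)$-dimensional linear subspaces of $\mathbb{R}^n$; $\mathcal{M}$ is a smooth manifold (the desingularization). General setting: for $\varphi\colon\mathcal{M}\to\mathcal{E}$ smooth with image $\mathcal{X}$ and a cost $f$, $g=f\circ\varphi$. Tangent cone: $\mathrm{T}_x\mathcal{X}=\{\lim (x_i-x)/\tau_i: x_i\in\mathcal{X},\tau_i>0,\tau_i\to0\}$; $K^*=\{u:\langle u,v\rangle\ge0\ \forall v\in K\}$; $x$ is stationary for $f$ on $\mathcal{X}$ if $\nabla f(x)\in(\mathrm{T}_x\mathcal{X})^*$. $y$ is 1-critical for $g$ if $(g\circ c)'(0)=0$ for all smooth curves $c$ in $\mathcal{M}$ with $c(0)=y$; 2-critical if moreover $(g\circ c)''(0)\ge0$ for all such curves. "local $\Rightarrow$ local" at $y$: for every continuous $f\colon\mathcal{X}\to\mathbb{R}$,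 if $y$ is a local minimum of $g$ then $\varphi(y)$ is a local minimum of $f$ on $\mathcal{X}$. "$k\Rightarrow1$" at $y$ ($k=1,2$): for every $k$-times differentiable $f\colon\mathcal{E}\to\mathbb{R}$, if $y$ is $k$-critical for $g$ then $\varphi(y)$ is stationary for $f$ on $\mathcal{X}$. *)

theory Defs
  imports "HOL-Analysis.Analysis"
begin

definition loc_min_on :: "'a::metric_space set \<Rightarrow> ('a \<Rightarrow> real) \<Rightarrow> 'a \<Rightarrow> bool" where
  "loc_min_on S h x \<longleftrightarrow> x \<in> S \<and> (\<exists>e>0. \<forall>z\<in>S. dist z x < e \<longrightarrow> h x \<le> h z)"

definition smooth_curve_in :: "'a::real_normed_vector set \<Rightarrow> (real \<Rightarrow> 'a) \<Rightarrow> bool" where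
  "smooth_curve_in M c \<longleftrightarrow> (\<forall>t. c t \<in> M) \<and>
     (\<exists>D :: nat \<Rightarrow> real \<Rightarrow> 'a. D 0 = c \<and>
        (\<forall>k t. (D k has_vector_derivative D (Suc k) t) (at t)))"

definition crit1 :: "'a::real_normed_vector set \<Rightarrow> ('a \<Rightarrow> real) \<Rightarrow> 'a \<Rightarrow> bool" where
  "crit1 M g y \<longleftrightarrow> (\<forall>c. smooth_curve_in M c \<and> c 0 = y \<longrightarrow> deriv (g \<circ> c) 0 = 0)"

definition crit2 :: "'a::real_normed_vector set \<Rightarrow> ('a \<Rightarrow> real) \<Rightarrow> 'a \<Rightarrow> bool" where
  "crit2 M g y \<longleftrightarrow> crit1 M g y \<and>
     (\<forall>c. smooth_curve_in M c \<and> c 0 = y \<longrightarrow> deriv (deriv (g \<circ> c)) 0 \<ge> 0)"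

definition tangent_cone :: "'b::real_normed_vector set \<Rightarrow> 'b \<Rightarrow> 'b set" where
  "tangent_cone X x = {v. \<exists>xs \<tau>. (\<forall>i. xs i \<in> X) \<and> (\<forall>i. \<tau> i > 0) \<and> \<tau> \<longlonglongrightarrow> 0 \<and>
       (\<lambda>i. (xs i - x) /\<^sub>R \<tau> i) \<longlonglongrightarrow> v}"

definition dual_cone :: "'b::real_inner set \<Rightarrow> 'b set" where
  "dual_cone K = {u. \<forall>v\<in>K. inner u v \<ge> 0}"

definition grad :: "('b::real_inner \<Rightarrow> real) \<Rightarrow> 'b \<Rightarrow> 'b" where
  "grad f x = (THE G. (f has_derivative (\<lambda>v. inner G v)) (at x))"

definition stationary_on :: "'b::real_inner set \<Rightarrow> ('b \<Rightarrow> real) \<Rightarrow> 'b \<Rightarrow> bool" where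
  "stationary_on X f x \<longleftrightarrow> grad f x \<in> dual_cone (tangent_cone X x)"

definition twice_differentiable :: "('b::real_normed_vector \<Rightarrow> real) \<Rightarrow> bool" where
  "twice_differentiable f \<longleftrightarrow> (\<exists>Df :: 'b \<Rightarrow> 'b \<Rightarrow>\<^sub>L real.
      (\<forall>x. (f has_derivative blinfun_apply (Df x)) (at x)) \<and> (\<forall>x. Df differentiable at x))"

definition local_to_local ::
  "'a::metric_space set \<Rightarrow> ('a \<Rightarrow> 'b::metric_space) \<Rightarrow> 'b set \<Rightarrow> 'a \<Rightarrow> bool" where
  "local_to_local M \<phi> X y \<longleftrightarrow>
     (\<forall>f::'b \<Rightarrow> real. continuous_on X f \<longrightarrow> loc_min_on M (f \<circ> \<phi>) y \<longrightarrow> loc_min_on X f (\<phi> y))"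

definition one_to_one ::
  "'a::real_normed_vector set \<Rightarrow> ('a \<Rightarrow> 'b::real_inner) \<Rightarrow> 'b set \<Rightarrow> 'a \<Rightarrow> bool" where
  "one_to_one M \<phi> X y \<longleftrightarrow>
     (\<forall>f::'b \<Rightarrow> real. (\<forall>x. f differentiable (at x)) \<longrightarrow> crit1 M (f \<circ> \<phi>) y \<longrightarrow> stationary_on X f (\<phi> y))"

definition two_to_one ::
  "'a::real_normed_vector set \<Rightarrow> ('a \<Rightarrow> 'b::real_inner) \<Rightarrow> 'b set \<Rightarrow> 'a \<Rightarrow> bool" where
  "two_to_one M \<phi> X y \<longleftrightarrow>
     (\<forall>f::'b \<Rightarrow> real. twice_differentiable f \<longrightarrow> crit2 M (f \<circ> \<phi>) y \<longrightarrow> stationary_on X f (\<phi> y))"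

definition low_rank :: "nat \<Rightarrow> (real^'n^'m) set" where
  "low_rank r = {X. rank X \<le> r}"

text \<open>Gr(n,k) realised (as a smooth manifold, diffeomorphically) as the set of orthogonal
  projectors of rank k; the subspace S corresponds to the projector P with range P = S.\<close>
definition grass_proj :: "nat \<Rightarrow> (real^'n^'n) set" where
  "grass_proj k = {P. transpose P = P \<and> P ** P = P \<and> rank P = k}"

text \<open>M = {(X,S) : S subset of ker X}; with S = range P this is X ** P = 0.\<close>
definition desing :: "nat \<Rightarrow> ((real^'n^'m) \<times> (real^'n^'n)) set" where
  "desing r = {(X, P). P \<in> grass_proj (CARD('n) - r) \<and> X ** P = 0}"

end

theory Submission
  imports Defs
begin

definition outer :: "real^'m \<Rightarrow> real^'n \<Rightarrow> real^'n^'m" where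
  "outer u v = (\<chi> i j. u$i * v$j)"

lemma outer_mv[simp]: "outer u v *v x = (v \<bullet> x) *\<^sub>R u"
  by (simp add: outer_def matrix_vector_mult_def inner_vec_def vec_eq_iff sum_distrib_left mult_ac)

lemma mv_component: "(A *v x) $ i = A $ i \<bullet> x"
  by (simp add: matrix_vector_mult_def inner_vec_def mult_ac)

lemma norm_mv: "norm (A *v x) \<le> norm (A::real^'n^'m) * norm x"
proof -
  have "norm (A *v x) = L2_set (\<lambda>i. norm ((A *v x) $ i)) UNIV" by (simp add: norm_vec_def)
  also have "\<dots> \<le> L2_set (\<lambda>i. norm (A $ i) * norm x) UNIV"
    by (rule L2_set_mono) (auto simp: mv_component Cauchy_Schwarz_ineq2)
  also have "\<dots> = norm A * norm x"
    by (simp add: norm_vec_def L2_set_left_distrib)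
  finally show ?thesis .
qed

lemma inner_outer: "inner (A::real^'n^'m) (outer u v) = u \<bullet> (A *v v)"
  by (simp add: outer_def inner_vec_def matrix_vector_mult_def sum_distrib_left mult_ac)

lemma outer_add_left: "outer (u + u') v = outer u v + outer u' v"
  and outer_add_right: "outer u (v + v') = outer u v + outer u v'"
  and outer_diff_left: "outer (u - u') v = outer u v - outer u' v"
  and outer_diff_right: "outer u (v - v') = outer u v - outer u v'"
  and outer_scale_left: "outer (c *\<^sub>R u) v = c *\<^sub>R outer u v"
  and outer_scale_right: "outer u (c *\<^sub>R v) = c *\<^sub>R outer u v"
  and outer_minus_left: "outer (- u) v = - outer u v"
  and outer_minus_right: "outer u (- v) = - outer u v"
  and outer_zero_left[simp]: "outer 0 v = 0"
  and outer_zero_right[simp]: "outer u 0 = 0"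
  by (simp_all add: outer_def vec_eq_iff algebra_simps)

lemmas outer_simps = outer_add_left outer_add_right outer_diff_left outer_diff_right
  outer_scale_left outer_scale_right outer_minus_left outer_minus_right

lemma inner_outer_outer: "inner (outer u v) (outer u' v') = (u \<bullet> u') * (v \<bullet> v')"
  by (simp add: inner_outer algebra_simps inner_commute)

lemma scaleR_mv: "(c *\<^sub>R A) *v x = c *\<^sub>R (A *v (x::real^'n))"
  by (simp add: vec_eq_iff matrix_vector_mult_def sum_distrib_left mult_ac)

lemma norm_outer: "norm (outer u v) = norm u * norm v"
proof -
  have "norm (outer u v) ^ 2 = (norm u * norm v)^2"
    by (simp add: power2_norm_eq_inner inner_outer_outer power_mult_distrib)
  then show ?thesis by (simp add: power2_eq_iff_nonneg)
qed

lemma outer_mult_outer: "outer u v ** outer w x = (v \<bullet> w) *\<^sub>R outer u x"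
  by (simp add: matrix_eq matrix_vector_mul_assoc[symmetric] algebra_simps scaleR_mv)

lemma mult_outer: "A ** outer u v = outer (A *v u) v"
  by (simp add: matrix_eq matrix_vector_mul_assoc[symmetric] algebra_simps)

lemma outer_mult: "outer u v ** A = outer u (transpose A *v v)"
  by (simp add: matrix_eq matrix_vector_mul_assoc[symmetric] algebra_simps dot_lmul_matrix)

lemma transpose_outer: "transpose (outer u v) = outer v u"
  by (simp add: outer_def transpose_def vec_eq_iff mult_ac)

lemma inner_mv_transpose: "u \<bullet> (A *v x) = (transpose A *v u) \<bullet> (x::real^'n)"
  apply (simp add: inner_vec_def inner_real_def matrix_vector_mult_def transpose_def sum_distrib_left sum_distrib_right)
  apply (subst sum.swap) apply (simp add: mult_ac)
  done

lemma inner_mult_transpose: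
  fixes A :: "real^'k^'m" and B :: "real^'n^'k"
  shows "inner (A ** B) C = inner A (C ** transpose B)"
  apply (simp add: inner_vec_def matrix_matrix_mult_def transpose_def sum_distrib_left sum_distrib_right)
  apply (rule sum.cong[OF refl])
  apply (subst sum.swap) apply (simp add: mult_ac)
  done

lemma inner_columns:
  fixes A B :: "real^'n^'m"
  shows "inner A B = (\<Sum>j\<in>UNIV. (A *v axis j 1) \<bullet> (B *v axis j 1))"
proof -
  have "(\<Sum>j\<in>UNIV. (A *v axis j 1) \<bullet> (B *v axis j 1)) = (\<Sum>j\<in>UNIV. \<Sum>i\<in>UNIV. A$i$j * B$i$j)"
    by (simp only: matrix_vector_mult_basis column_def inner_vec_def vec_lambda_beta inner_real_def)
  also have "\<dots> = (\<Sum>i\<in>UNIV. \<Sum>j\<in>UNIV. A$i$j * B$i$j)" by (rule sum.swap)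
  also have "\<dots> = inner A B" by (simp only: inner_vec_def inner_real_def)
  finally show ?thesis by (rule sym)
qed


lemma subspace_ker: "subspace {x. (A::real^'n^'m) *v x = 0}"
  by (simp add: subspace_def matrix_vector_right_distrib matrix_vector_mult_scaleR)

lemma subspace_range_mv: "subspace (range (\<lambda>x. (A::real^'n^'m) *v x))"
  unfolding subspace_def
proof (intro conjI ballI allI)
  show "0 \<in> range ((*v) A)" by (metis matrix_vector_mult_0_right rangeI)
  fix x y assume "x \<in> range ((*v) A)" "y \<in> range ((*v) A)"
  then obtain v w where "x = A *v v" "y = A *v w" by auto
  then show "x + y \<in> range ((*v) A)" by (metis matrix_vector_right_distrib rangeI)
next
  fix c x assume "x \<in> range ((*v) A)"
  then obtain v where "x = A *v v" by auto
  then show "c *\<^sub>R x \<in> range ((*v) A)" by (metis matrix_vector_mult_scaleR rangeI)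
qed

lemma rank_nullity: "dim {x. (A::real^'n^'m) *v x = 0} + rank A = CARD('n)"
proof -
  let ?R = "range (\<lambda>z. transpose A *v z)"
  have eq: "{x. A *v x = 0} = {y \<in> UNIV. \<forall>x \<in> ?R. orthogonal x y}"
  proof (rule set_eqI, rule iffI)
    fix y assume "y \<in> {x. A *v x = 0}"
    then have "A *v y = 0" by simp
    then have "\<forall>z. (transpose A *v z) \<bullet> y = 0"
      by (metis inner_mv_transpose inner_zero_right)
    then show "y \<in> {y \<in> UNIV. \<forall>x \<in> ?R. orthogonal x y}" by (auto simp: orthogonal_def)
  next
    fix y assume "y \<in> {y \<in> UNIV. \<forall>x \<in> ?R. orthogonal x y}"
    then have "\<forall>z. (transpose A *v z) \<bullet> y = 0" by (auto simp: orthogonal_def)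
    then have "(A *v y) \<bullet> (A *v y) = 0" by (metis inner_mv_transpose)
    then show "y \<in> {x. A *v x = 0}" by simp
  qed
  have "dim {y \<in> UNIV. \<forall>x \<in> ?R. orthogonal x y} + dim ?R = dim (UNIV :: (real^'n) set)"
    by (rule dim_subspace_orthogonal_to_vectors) (rule subspace_range_mv | simp)+
  moreover have "dim ?R = rank A" by (metis rank_dim_range rank_transpose)
  ultimately show ?thesis using eq by simp
qed

lemma rank_le_ncols: "rank (A::real^'n^'m) \<le> CARD('n)"
  using rank_nullity[of A] by linarith

subsection \<open>Projectors\<close>

lemma grass_projD:
  assumes "P \<in> grass_proj k"
  shows "transpose P = P" "P ** P = P" "rank P = k"
  using assms by (auto simp: grass_proj_def)

lemma proj_idem: assumes "P ** P = P" shows "P *v (P *v x) = P *v x"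
  by (simp add: matrix_vector_mul_assoc assms)

lemma proj_sym_inner: assumes "transpose P = P" shows "(P *v x) \<bullet> y = x \<bullet> (P *v (y::real^'n))"
  by (metis assms inner_commute inner_mv_transpose)

lemma proj_range: assumes "P ** P = P"
  shows "range (\<lambda>x. P *v x) = {x. P *v x = x}"
proof
  show "range ((*v) P) \<subseteq> {x. P *v x = x}" using proj_idem[OF assms] by auto
  show "{x. P *v x = x} \<subseteq> range ((*v) P)" by (auto, metis rangeI)
qed

lemma proj_dim_fix: assumes "P \<in> grass_proj k" shows "dim {x. P *v x = x} = k"
proof -
  have "range (\<lambda>x. P *v x) = {x. P *v x = x}" by (rule proj_range[OF grass_projD(2)[OF assms]])
  then show ?thesis using grass_projD(3)[OF assms] rank_dim_range[of P] by simp
qed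

lemma proj_dim_ker: fixes P :: "real^'n^'n" assumes "P \<in> grass_proj k" shows "dim {x. P *v x = 0} = CARD('n) - k"
proof -
  have "dim {x. P *v x = 0} + k = CARD('n)" using rank_nullity[of P] grass_projD(3)[OF assms] by simp
  then show ?thesis by linarith
qed

lemma subspace_fix: "subspace {x. (P::real^'n^'n) *v x = x}"
  by (simp add: subspace_def matrix_vector_right_distrib matrix_vector_mult_scaleR)

lemma proj_norm_le: fixes P :: "real^'n^'n" assumes "transpose P = P" "P ** P = P" shows "norm (P *v x) \<le> norm x"
proof -
  have "(P *v x) \<bullet> (P *v x) = x \<bullet> (P *v x)"
    by (simp add: proj_sym_inner[OF assms(1)] proj_idem[OF assms(2)])
  also have "\<dots> \<le> norm x * norm (P *v x)" by (rule Cauchy_Schwarz_ineq2[THEN order_trans[OF abs_ge_self]])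
  finally have "norm (P *v x) ^ 2 \<le> norm x * norm (P *v x)" by (simp add: power2_norm_eq_inner)
  then have "norm (P *v x) * norm (P *v x) \<le> norm x * norm (P *v x)" by (simp add: power2_eq_square)
  then show ?thesis by (cases "norm (P *v x) = 0") (auto simp: mult_le_cancel_right)
qed

lemma desing_rank:
  assumes "(X, P) \<in> desing r" "r < CARD('n)"
  shows "rank (X::real^'n^'m) \<le> r"
    and "rank X = r \<Longrightarrow> {x. X *v x = 0} = {x. P *v x = x}"
    and "{x. P *v x = x} \<subseteq> {x. X *v x = 0}"
proof -
  have P: "P \<in> grass_proj (CARD('n) - r)" and XP: "X ** P = 0" using assms by (auto simp: desing_def)
  show sub: "{x. P *v x = x} \<subseteq> {x. X *v x = 0}"
  proof
    fix x assume "x \<in> {x. P *v x = x}"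
    then have "X *v x = X *v (P *v x)" by simp
    also have "\<dots> = 0" by (simp add: matrix_vector_mul_assoc XP)
    finally show "x \<in> {x. X *v x = 0}" by simp
  qed
  have "dim {x. P *v x = x} \<le> dim {x. X *v x = 0}" by (rule dim_subset[OF sub])
  then have le: "CARD('n) - r \<le> dim {x. X *v x = 0}" using proj_dim_fix[OF P] by simp
  then show "rank X \<le> r" using rank_nullity[of X] assms(2) by linarith
  assume "rank X = r"
  then have "dim {x. X *v x = 0} \<le> dim {x. P *v x = x}" using rank_nullity[of X] proj_dim_fix[OF P] by linarith
  then show "{x. X *v x = 0} = {x. P *v x = x}"
    using subspace_dim_equal[OF subspace_fix subspace_ker sub] by simp
qed

subsection \<open>Injectivity, bounded below, rank\<close>

lemma inj_bounded_below:
  assumes "subspace S" "\<forall>x\<in>S. (A::real^'n^'m) *v x = 0 \<longrightarrow> x = 0"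
  shows "\<exists>c>0. \<forall>x\<in>S. c * norm x \<le> norm (A *v x)"
  using injective_imp_isometric[OF closed_subspace[OF assms(1)] assms(1) matrix_vector_mul_bounded_linear assms(2)]
  by (auto simp: mult.commute)

lemma perturb_below:
  assumes "\<forall>x\<in>S. c * norm x \<le> norm ((A::real^'n^'m) *v x)" "x \<in> S"
  shows "(c - norm (B - A)) * norm x \<le> norm (B *v x)"
proof -
  have "A *v x = B *v x - (B - A) *v x" by (simp add: algebra_simps)
  then have "norm (A *v x) \<le> norm (B *v x) + norm ((B - A) *v x)"
    by (metis norm_triangle_ineq4)
  moreover have "norm ((B - A) *v x) \<le> norm (B - A) * norm x" by (rule norm_mv)
  moreover have "c * norm x \<le> norm (A *v x)" using assms by auto
  ultimately show ?thesis by (simp add: left_diff_distrib)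
qed

lemma rank_ge_inj:
  assumes "subspace S" "\<forall>x\<in>S. (B::real^'n^'m) *v x = 0 \<longrightarrow> x = 0"
  shows "dim S \<le> rank B"
proof -
  have inj: "inj_on (\<lambda>x. B *v x) (span S)"
  proof (rule inj_onI)
    fix x y assume "x \<in> span S" "y \<in> span S" "B *v x = B *v y"
    moreover have "span S = S" using assms(1) by (simp add: span_eq_iff)
    ultimately have "x - y \<in> S" "B *v (x - y) = 0"
      using assms(1) by (auto simp: matrix_vector_mult_diff_distrib subspace_diff)
    then show "x = y" using assms(2) by auto
  qed
  have "dim ((\<lambda>x. B *v x) ` S) = dim S"
    by (rule dim_image_eq[OF matrix_vector_mul_linear inj])
  moreover have "dim ((\<lambda>x. B *v x) ` S) \<le> rank B"
    unfolding rank_dim_range by (rule dim_subset) auto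
  ultimately show ?thesis by simp
qed

lemma rank_lsc:
  fixes A :: "real^'n^'m"
  shows "\<exists>d>0. \<forall>B. norm (B - A) < d \<longrightarrow> rank A \<le> rank B"
proof -
  let ?S = "range (\<lambda>z. transpose A *v z)"
  have inj: "\<forall>x\<in>?S. A *v x = 0 \<longrightarrow> x = 0"
  proof clarify
    fix z assume "A *v (transpose A *v z) = 0"
    then have "(transpose A *v z) \<bullet> (transpose A *v z) = 0"
      by (metis inner_mv_transpose inner_zero_right)
    then show "transpose A *v z = 0" by simp
  qed
  obtain c where c: "c > 0" "\<forall>x\<in>?S. c * norm x \<le> norm (A *v x)"
    using inj_bounded_below[OF subspace_range_mv inj] by blast
  have dS: "dim ?S = rank A" by (metis rank_dim_range rank_transpose)
  show ?thesis
  proof (intro exI[of _ c] conjI allI impI)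
    fix B assume "norm (B - A) < c"
    have "\<forall>x\<in>?S. B *v x = 0 \<longrightarrow> x = 0"
    proof clarify
      fix z assume "B *v (transpose A *v z) = 0"
      then have "(c - norm (B - A)) * norm (transpose A *v z) \<le> 0"
        using perturb_below[OF c(2), of "transpose A *v z" B] by auto
      then show "transpose A *v z = 0" using \<open>norm (B - A) < c\<close>
        by (simp add: mult_le_0_iff)
    qed
    then have "dim ?S \<le> rank B" by (rule rank_ge_inj[OF subspace_range_mv])
    then show "rank A \<le> rank B" using dS by simp
  qed (use c in auto)
qed

lemma rank_add_le: "rank ((A::real^'n^'m) + B) \<le> rank A + rank B"
proof -
  let ?RA = "range (\<lambda>x. A *v x)" and ?RB = "range (\<lambda>x. B *v x)"
  have "range (\<lambda>x. (A + B) *v x) \<subseteq> {x + y |x y. x \<in> ?RA \<and> y \<in> ?RB}"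
    by (auto simp: matrix_vector_mult_add_rdistrib)
  then have "rank (A + B) \<le> dim {x + y |x y. x \<in> ?RA \<and> y \<in> ?RB}"
    unfolding rank_dim_range by (rule dim_subset)
  also have "\<dots> \<le> dim ?RA + dim ?RB"
    using dim_sums_Int[OF subspace_range_mv subspace_range_mv, of A B] by linarith
  finally show ?thesis by (simp add: rank_dim_range)
qed

lemma rank_outer_le: "rank (outer u v) \<le> 1"
proof -
  have "range (\<lambda>x. outer u v *v x) \<subseteq> span {u}" by (auto simp: span_base span_scale)
  then have "rank (outer u v) \<le> card {u}" unfolding rank_dim_range by (rule dim_le_card) auto
  then show ?thesis by simp
qed


subsection \<open>Gradients\<close>

lemma grad_eq:
  assumes "(f has_derivative (\<lambda>v. inner G v)) (at x)"
  shows "grad f x = G"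
  unfolding grad_def
proof (rule the_equality)
  show "(f has_derivative (\<lambda>v. inner G v)) (at x)" by fact
  fix G' assume "(f has_derivative (\<lambda>v. inner G' v)) (at x)"
  then have "(\<lambda>v. inner G' v) = (\<lambda>v. inner G v)" using has_derivative_unique assms by blast
  then have "inner G' (G' - G) = inner G (G' - G)" by metis
  then have "inner (G' - G) (G' - G) = 0" by (simp add: inner_diff_left)
  then show "G' = G" by simp
qed

lemma linear_repr:
  fixes L :: "'a::euclidean_space \<Rightarrow> real"
  assumes "linear L"
  shows "L = (\<lambda>v. inner (\<Sum>b\<in>Basis. L b *\<^sub>R b) v)"
proof
  fix v
  have "L v = L (\<Sum>b\<in>Basis. (v \<bullet> b) *\<^sub>R b)" by (simp add: euclidean_representation)
  also have "\<dots> = (\<Sum>b\<in>Basis. (v \<bullet> b) * L b)"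
    by (simp add: linear_sum[OF assms] linear_scale[OF assms])
  also have "\<dots> = inner (\<Sum>b\<in>Basis. L b *\<^sub>R b) v"
    by (simp add: inner_sum_right inner_commute mult.commute)
  finally show "L v = inner (\<Sum>b\<in>Basis. L b *\<^sub>R b) v" .
qed

lemma grad_exists:
  fixes f :: "'a::euclidean_space \<Rightarrow> real"
  assumes "(f has_derivative L) (at x)"
  shows "(f has_derivative (\<lambda>v. inner (grad f x) v)) (at x)" "L = (\<lambda>v. inner (grad f x) v)"
proof -
  have L: "L = (\<lambda>v. inner (\<Sum>b\<in>Basis. L b *\<^sub>R b) v)"
    by (rule linear_repr[OF has_derivative_linear[OF assms]])
  then have "(f has_derivative (\<lambda>v. inner (\<Sum>b\<in>Basis. L b *\<^sub>R b) v)) (at x)" using assms by metis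
  then have g: "grad f x = (\<Sum>b\<in>Basis. L b *\<^sub>R b)" by (rule grad_eq)
  show "(f has_derivative (\<lambda>v. inner (grad f x) v)) (at x)" "L = (\<lambda>v. inner (grad f x) v)"
    using assms L g by metis+
qed

subsection \<open>A family of smooth curves closed under differentiation\<close>

definition tc :: "(nat \<Rightarrow> 'a::real_normed_vector) \<Rightarrow> real \<Rightarrow> 'a" where
  "tc A t = A 0 + t *\<^sub>R A 1 + sin t *\<^sub>R A 2 + (t * sin t) *\<^sub>R A 3 + cos t *\<^sub>R A 4 + (t * cos t) *\<^sub>R A 5"

definition dc :: "(nat \<Rightarrow> 'a::real_normed_vector) \<Rightarrow> nat \<Rightarrow> 'a" where
  "dc A = (\<lambda>i. if i = 0 then A 1 else if i = 2 then A 3 - A 4 else if i = 3 then - A 5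
              else if i = 4 then A 2 + A 5 else if i = 5 then A 3 else 0)"

lemma hvd_scaleR_const:
  "(f has_field_derivative f') (at t) \<Longrightarrow> ((\<lambda>t. f t *\<^sub>R c) has_vector_derivative f' *\<^sub>R c) (at t)"
  using has_vector_derivative_scaleR[OF _ has_vector_derivative_const, of f f' t UNIV c] by simp

lemma tc_deriv: "(tc A has_vector_derivative tc (dc A) t) (at t)"
proof -
  have d1: "((\<lambda>t. t *\<^sub>R A 1) has_vector_derivative 1 *\<^sub>R A 1) (at t)"
    by (rule hvd_scaleR_const) (auto intro!: derivative_eq_intros)
  have d2: "((\<lambda>t. sin t *\<^sub>R A 2) has_vector_derivative cos t *\<^sub>R A 2) (at t)"
    by (rule hvd_scaleR_const) (auto intro!: derivative_eq_intros)
  have d3: "((\<lambda>t. (t * sin t) *\<^sub>R A 3) has_vector_derivative (sin t + t * cos t) *\<^sub>R A 3) (at t)"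
    by (rule hvd_scaleR_const) (auto intro!: derivative_eq_intros)
  have d4: "((\<lambda>t. cos t *\<^sub>R A 4) has_vector_derivative (- sin t) *\<^sub>R A 4) (at t)"
    by (rule hvd_scaleR_const) (auto intro!: derivative_eq_intros)
  have d5: "((\<lambda>t. (t * cos t) *\<^sub>R A 5) has_vector_derivative (cos t - t * sin t) *\<^sub>R A 5) (at t)"
    by (rule hvd_scaleR_const) (auto intro!: derivative_eq_intros)
  have "((\<lambda>t. A 0 + t *\<^sub>R A 1 + sin t *\<^sub>R A 2 + (t * sin t) *\<^sub>R A 3 + cos t *\<^sub>R A 4 + (t * cos t) *\<^sub>R A 5)
     has_vector_derivative
       (0 + 1 *\<^sub>R A 1 + cos t *\<^sub>R A 2 + (sin t + t * cos t) *\<^sub>R A 3 + (- sin t) *\<^sub>R A 4 + (cos t - t * sin t) *\<^sub>R A 5)) (at t)"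
    by (intro has_vector_derivative_add has_vector_derivative_const d1 d2 d3 d4 d5)
  moreover have "(0 + 1 *\<^sub>R A 1 + cos t *\<^sub>R A 2 + (sin t + t * cos t) *\<^sub>R A 3 + (- sin t) *\<^sub>R A 4 + (cos t - t * sin t) *\<^sub>R A 5)
      = tc (dc A) t"
    by (simp add: tc_def dc_def algebra_simps)
  ultimately show ?thesis by (simp add: tc_def[abs_def])
qed

lemma tc_smooth: assumes "\<forall>t. tc A t \<in> M" shows "smooth_curve_in M (tc A)"
  unfolding smooth_curve_in_def
proof (rule conjI[OF assms], rule exI[of _ "\<lambda>k. tc ((dc ^^ k) A)"], rule conjI)
  show "tc ((dc ^^ 0) A) = tc A" by simp
  show "\<forall>k t. (tc ((dc ^^ k) A) has_vector_derivative tc ((dc ^^ Suc k) A) t) (at t)"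
    by (intro allI) (simp only: funpow.simps o_apply tc_deriv)
qed

lemma tc_0: "tc A 0 = A 0 + A 4" by (simp add: tc_def)
lemma tc_d0: "tc (dc A) 0 = A 1 + A 2 + A 5" by (simp add: tc_def dc_def)
lemma tc_dd0: "tc (dc (dc A)) 0 = 2 *\<^sub>R A 3 - A 4" by (simp add: tc_def dc_def scaleR_2)

lemma crit1_tc:
  fixes f :: "'b::real_inner \<Rightarrow> real"
  assumes "crit1 M (f \<circ> fst) y" "\<forall>t. tc A t \<in> M" "tc A 0 = y"
    and "(f has_derivative L) (at (fst y))"
  shows "L (fst (tc (dc A) 0)) = 0"
proof -
  have "deriv ((f \<circ> fst) \<circ> tc A) 0 = 0"
    using assms(1) tc_smooth[OF assms(2)] assms(3) unfolding crit1_def by blast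
  moreover have "((f \<circ> (fst \<circ> tc A)) has_vector_derivative L (fst (tc (dc A) 0))) (at 0)"
  proof (rule vector_derivative_diff_chain_within)
    show "((fst \<circ> tc A) has_vector_derivative fst (tc (dc A) 0)) (at 0)"
      using bounded_linear.has_vector_derivative[OF bounded_linear_fst tc_deriv] by (simp add: o_def)
    show "(f has_derivative L) (at ((fst \<circ> tc A) 0) within (fst \<circ> tc A) ` UNIV)"
      using assms(3,4) by (auto intro: has_derivative_at_withinI)
  qed
  then have "((f \<circ> fst) \<circ> tc A has_field_derivative L (fst (tc (dc A) 0))) (at 0)"
    by (simp add: has_real_derivative_iff_has_vector_derivative o_assoc)
  ultimately show ?thesis using DERIV_imp_deriv by metis
qed

lemma crit2_tc:
  fixes f :: "'b::real_normed_vector \<Rightarrow> real" and Df :: "'b \<Rightarrow> 'b \<Rightarrow>\<^sub>L real"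
  assumes "crit2 M (f \<circ> fst) y" "\<forall>t. tc A t \<in> M" "tc A 0 = y"
    and Df: "\<forall>x. (f has_derivative blinfun_apply (Df x)) (at x)"
    and DDf: "(Df has_derivative DDf) (at (fst y))"
  shows "blinfun_apply (DDf (fst (tc (dc A) 0))) (fst (tc (dc A) 0))
          + blinfun_apply (Df (fst y)) (fst (tc (dc (dc A)) 0)) \<ge> 0"
proof -
  define Y where "Y = (\<lambda>t. fst (tc A t))"
  define Y1 where "Y1 = (\<lambda>t. fst (tc (dc A) t))"
  define Y2 where "Y2 = (\<lambda>t. fst (tc (dc (dc A)) t))"
  have dY: "(Y has_vector_derivative Y1 t) (at t)" for t
    using bounded_linear.has_vector_derivative[OF bounded_linear_fst tc_deriv] by (simp add: Y_def Y1_def)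
  have dY1: "(Y1 has_vector_derivative Y2 t) (at t)" for t
    using bounded_linear.has_vector_derivative[OF bounded_linear_fst tc_deriv] by (simp add: Y2_def Y1_def)
  have dg: "((f \<circ> fst) \<circ> tc A has_field_derivative blinfun_apply (Df (Y t)) (Y1 t)) (at t)" for t
  proof -
    have "((f \<circ> Y) has_vector_derivative blinfun_apply (Df (Y t)) (Y1 t)) (at t)"
      by (rule vector_derivative_diff_chain_within[OF dY]) (auto intro: has_derivative_at_withinI Df[rule_format])
    then show ?thesis by (simp add: has_real_derivative_iff_has_vector_derivative Y_def o_def)
  qed
  then have dgeq: "deriv ((f \<circ> fst) \<circ> tc A) = (\<lambda>t. blinfun_apply (Df (Y t)) (Y1 t))"
    using DERIV_imp_deriv by blast
  have Y0: "Y 0 = fst y" using assms(3) by (simp add: Y_def)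
  have dDY: "((\<lambda>t. Df (Y t)) has_vector_derivative DDf (Y1 0)) (at 0)"
  proof -
    have "((Df \<circ> Y) has_vector_derivative DDf (Y1 0)) (at 0)"
      by (rule vector_derivative_diff_chain_within[OF dY]) (use DDf Y0 in \<open>auto intro: has_derivative_at_withinI\<close>)
    then show ?thesis by (simp add: o_def)
  qed
  have "((\<lambda>t. blinfun_apply (Df (Y t)) (Y1 t)) has_vector_derivative
          (blinfun_apply (Df (Y 0)) (Y2 0) + blinfun_apply (DDf (Y1 0)) (Y1 0))) (at 0)"
    using bounded_bilinear.has_vector_derivative[OF bounded_bilinear_blinfun_apply dDY dY1] by simp
  then have "deriv (\<lambda>t. blinfun_apply (Df (Y t)) (Y1 t)) 0
          = blinfun_apply (Df (Y 0)) (Y2 0) + blinfun_apply (DDf (Y1 0)) (Y1 0)"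
    by (intro DERIV_imp_deriv) (simp add: has_real_derivative_iff_has_vector_derivative)
  moreover have "deriv (deriv ((f \<circ> fst) \<circ> tc A)) 0 \<ge> 0"
    using assms(1) tc_smooth[OF assms(2)] assms(3) unfolding crit2_def by blast
  ultimately show ?thesis using dgeq Y0 by (simp add: Y1_def Y2_def add.commute)
qed


lemma transpose_add: "transpose (A + B) = transpose A + transpose (B::real^'n^'m)"
  by (simp add: transpose_def vec_eq_iff)
lemma transpose_diff: "transpose (A - B) = transpose A - transpose (B::real^'n^'m)"
  by (simp add: transpose_def vec_eq_iff)

lemma mat_prod_zero_iff: "(A ** B = 0) \<longleftrightarrow> (\<forall>x. A *v (B *v x) = 0)"
  by (simp add: matrix_eq matrix_vector_mul_assoc)

lemma desingI:
  assumes "Q \<in> grass_proj (CARD('n) - r)" "\<forall>x. Y *v (Q *v x) = 0"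
  shows "(Y::real^'n^'m, Q) \<in> desing r"
  using assms by (simp add: desing_def mat_prod_zero_iff)

lemma desingD:
  assumes "(Y::real^'n^'m, Q) \<in> desing r"
  shows "Q \<in> grass_proj (CARD('n) - r)" "Y *v (Q *v x) = 0"
  using assms by (auto simp: desing_def mat_prod_zero_iff)

definition lin_coef :: "real^'n^'m \<Rightarrow> real^'n^'n \<Rightarrow> real^'n^'m \<Rightarrow> nat \<Rightarrow> (real^'n^'m) \<times> (real^'n^'n)" where
  "lin_coef X P V = (\<lambda>i. if i = 0 then (X, P) else if i = 1 then (V, 0) else 0)"

lemma lin_curve:
  assumes "(X, P) \<in> desing r" "\<forall>x. V *v (P *v x) = 0"
  shows "\<forall>t. tc (lin_coef X P V) t \<in> desing r" "tc (lin_coef X P V) 0 = (X, P)"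
    "fst (tc (dc (lin_coef X P V)) 0) = V"
proof -
  have tcv: "tc (lin_coef X P V) t = (X + t *\<^sub>R V, P)" for t
    by (simp add: tc_def lin_coef_def)
  show "\<forall>t. tc (lin_coef X P V) t \<in> desing r"
  proof
    fix t
    show "tc (lin_coef X P V) t \<in> desing r" unfolding tcv
      by (rule desingI) (use desingD[OF assms(1)] assms(2) in \<open>auto simp: matrix_vector_mult_add_rdistrib scaleR_mv\<close>)
  qed
  show "tc (lin_coef X P V) 0 = (X, P)" by (simp add: tcv)
  show "fst (tc (dc (lin_coef X P V)) 0) = V" by (simp add: tc_d0 lin_coef_def)
qed

subsection \<open>Rotated projectors\<close>

lemma rotQ_mv: "(P - outer a a + outer y y) *v x = P *v x - (a \<bullet> x) *\<^sub>R a + (y \<bullet> x) *\<^sub>R y"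
  by (simp add: matrix_vector_mult_add_rdistrib matrix_vector_mult_diff_rdistrib)

lemma rotQ_props:
  fixes P :: "real^'n^'n"
  assumes P: "P \<in> grass_proj k" and a: "P *v a = a" "norm a = 1"
    and y: "norm y = 1" "P *v y = (a \<bullet> y) *\<^sub>R a"
  shows "P - outer a a + outer y y \<in> grass_proj k"
proof -
  let ?Q = "P - outer a a + outer y y"
  have Ps: "transpose P = P" and Pi: "P ** P = P" and Pr: "rank P = k" using grass_projD[OF P] by auto
  have aa: "a \<bullet> a = 1" and yy: "y \<bullet> y = 1" using a y by (simp_all add: dot_square_norm)
  have Psym: "(P *v u) \<bullet> v = u \<bullet> (P *v v)" for u v by (rule proj_sym_inner[OF Ps])
  have aP: "a \<bullet> (P *v x) = a \<bullet> x" for x using Psym[of a x] a by simp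
  have yP: "y \<bullet> (P *v x) = (a \<bullet> y) * (a \<bullet> x)" for x using Psym[of y x] y by simp
  have PP: "P *v (P *v x) = P *v x" for x by (rule proj_idem[OF Pi])
  have sym: "transpose ?Q = ?Q" by (simp add: transpose_add transpose_diff transpose_outer Ps)
  have idem: "?Q ** ?Q = ?Q"
  proof (rule matrix_eq[THEN iffD2], intro allI)
    fix x
    have "?Q *v (?Q *v x) = P *v x - (a \<bullet> x) *\<^sub>R a + (y \<bullet> x) *\<^sub>R y"
      by (simp add: rotQ_mv matrix_vector_right_distrib matrix_vector_mult_diff_distrib matrix_vector_mult_scaleR
          inner_add_right inner_diff_right PP aP yP a y aa yy inner_commute[of y a] algebra_simps)
    then show "(?Q ** ?Q) *v x = ?Q *v x" by (simp add: matrix_vector_mul_assoc[symmetric] rotQ_mv)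
  qed
  let ?W = "{x. P *v x = x}"
  let ?W' = "{w \<in> ?W. \<forall>u \<in> span {a}. orthogonal u w}"
  have subW: "subspace ?W" by (rule subspace_fix)
  have aW: "a \<in> ?W" using a by simp
  have spa: "span {a} \<subseteq> ?W" using aW subW by (simp add: span_minimal)
  have dW': "dim ?W' + dim (span {a}) = dim ?W"
    by (rule dim_subspace_orthogonal_to_vectors[OF subspace_span subW spa])
  have "dim (span {a}) = 1" using a by (simp add: dim_span_eq_card_independent) (metis dim_singleton norm_zero zero_neq_one)
  then have dW'k: "dim ?W' + 1 = k" using dW' proj_dim_fix[OF P] by simp
  have W'_char: "w \<in> ?W' \<longleftrightarrow> P *v w = w \<and> a \<bullet> w = 0" for w
    by (auto simp: span_singleton orthogonal_def)
  have W'eq: "?W' = {w. P *v w = w \<and> a \<bullet> w = 0}" using W'_char by blast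
  have subW': "subspace ?W'"
    unfolding W'eq subspace_def
    by (simp add: matrix_vector_right_distrib matrix_vector_mult_scaleR inner_add_right)
  have yW': "y \<bullet> w = 0" if "w \<in> ?W'" for w
  proof -
    have "y \<bullet> w = y \<bullet> (P *v w)" using that W'_char by simp
    also have "\<dots> = (a \<bullet> y) * (a \<bullet> w)" by (rule yP)
    finally show ?thesis using that W'_char by simp
  qed
  have ynot: "y \<notin> span ?W'"
  proof
    have spW': "span ?W' = ?W'" using subW' by (rule span_eq_iff[THEN iffD2])
    assume "y \<in> span ?W'" then have "y \<in> ?W'" by (simp only: spW')
    then have "y \<bullet> y = 0" using yW' by blast
    then show False using yy by simp
  qed
  let ?S = "span (insert y ?W')"
  have dS: "dim ?S = k" using dim_insert[of y ?W'] ynot dW'k by simp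
  have Qfix: "?Q *v x = x" if xS: "x \<in> ?S" for x
  proof -
    obtain c where "x - c *\<^sub>R y \<in> span ?W'" using xS span_breakdown_eq[of x y ?W'] by blast
    moreover have spW': "span ?W' = ?W'" using subW' by (rule span_eq_iff[THEN iffD2])
    ultimately have w: "x - c *\<^sub>R y \<in> ?W'" by (simp only: spW')
    define w where "w = x - c *\<^sub>R y"
    have x: "x = w + c *\<^sub>R y" by (simp add: w_def)
    note w = w[folded w_def]
    have "?Q *v w = w" using w W'_char yW'[OF w] by (simp add: rotQ_mv inner_commute)
    moreover have "?Q *v y = y" by (simp add: rotQ_mv y(2) yy inner_commute[of y a])
    ultimately show ?thesis unfolding x by (simp add: matrix_vector_right_distrib matrix_vector_mult_scaleR)
  qed
  have "dim ?S \<le> rank ?Q"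
    by (rule rank_ge_inj[OF subspace_span]) (use Qfix in auto)
  moreover have "rank ?Q \<le> dim ?S"
  proof -
    have "range (\<lambda>x. ?Q *v x) \<subseteq> ?S"
    proof clarify
      fix x
      have "P *v x - (a \<bullet> x) *\<^sub>R a \<in> ?W'"
        unfolding W'_char by (simp add: matrix_vector_mult_diff_distrib matrix_vector_mult_scaleR PP a aP aa inner_diff_right)
      then have "P *v x - (a \<bullet> x) *\<^sub>R a \<in> ?S" by (simp add: span_base)
      moreover have "(y \<bullet> x) *\<^sub>R y \<in> ?S" by (simp add: span_base span_scale)
      ultimately show "?Q *v x \<in> ?S" unfolding rotQ_mv by (simp add: span_add)
    qed
    then have "dim (range (\<lambda>x. ?Q *v x)) \<le> dim ?S" by (rule dim_subset)
    then show ?thesis by (simp only: rank_dim_range)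
  qed
  ultimately have "rank ?Q = k" using dS by simp
  then show ?thesis using sym idem by (simp add: grass_proj_def)
qed


definition rot_coef :: "real^'n^'m \<Rightarrow> real^'n^'n \<Rightarrow> real^'n \<Rightarrow> real^'n \<Rightarrow> real^'m \<Rightarrow> real^'m
     \<Rightarrow> nat \<Rightarrow> (real^'n^'m) \<times> (real^'n^'n)" where
  "rot_coef X P a b p q = (\<lambda>i.
     if i = 0 then (X - outer p a + outer q b, P - (1/2) *\<^sub>R outer a a + (1/2) *\<^sub>R outer b b)
     else if i = 2 then (outer p b + outer q a, (1/2) *\<^sub>R (outer a b + outer b a))
     else if i = 4 then (outer p a - outer q b, (1/2) *\<^sub>R (outer a a - outer b b))
     else 0)"

lemma rot_curve:
  fixes X :: "real^'n^'m"
  assumes XP: "(X, P) \<in> desing r" and Pa: "P *v a = a" and Pb: "P *v b = 0"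
    and na: "norm a = 1" and nb: "norm b = 1" and q: "q = - (1/2) *\<^sub>R (X *v b)"
  shows "\<forall>t. tc (rot_coef X P a b p q) t \<in> desing r"
    "tc (rot_coef X P a b p q) 0 = (X, P)"
    "fst (tc (dc (rot_coef X P a b p q)) 0) = outer p b + outer q a"
    "fst (tc (dc (dc (rot_coef X P a b p q))) 0) = outer q b - outer p a"
proof -
  let ?A = "rot_coef X P a b p q"
  have P: "P \<in> grass_proj (CARD('n) - r)" using desingD[OF XP] by simp
  have Ps: "transpose P = P" using grass_projD[OF P] by simp
  have Psym: "(P *v u) \<bullet> v = u \<bullet> (P *v v)" for u v by (rule proj_sym_inner[OF Ps])
  have aa: "a \<bullet> a = 1" and bb: "b \<bullet> b = 1" using na nb by (simp_all add: dot_square_norm)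
  have ab: "a \<bullet> b = 0" using Psym[of a b] Pa Pb by simp
  have ba: "b \<bullet> a = 0" using ab by (simp add: inner_commute)
  have aP: "a \<bullet> (P *v x) = a \<bullet> x" for x using Psym[of a x] Pa by simp
  have bP: "b \<bullet> (P *v x) = 0" for x using Psym[of b x] Pb by simp
  have XPx: "X *v (P *v x) = 0" for x using desingD(2)[OF XP] by simp
  have Xa: "X *v a = 0" using XPx[of a] Pa by simp
  show "\<forall>t. tc ?A t \<in> desing r"
  proof
    fix t :: real
    define c where "c = cos (t/2)"
    define s where "s = sin (t/2)"
    define y where "y = c *\<^sub>R a + s *\<^sub>R b"
    have sint: "sin t = 2 * s * c" unfolding s_def c_def using sin_double[of "t/2"] by simp
    have cost: "cos t = c^2 - s^2" unfolding s_def c_def using cos_double[of "t/2"] by simp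
    have cs1: "c^2 + s^2 = 1" unfolding s_def c_def by simp
    have ay: "a \<bullet> y = c" by (simp add: y_def inner_add_right aa ab)
    have by': "b \<bullet> y = s" by (simp add: y_def inner_add_right bb ba)
    have yy: "y \<bullet> y = 1" using cs1 by (simp add: y_def inner_add_left inner_add_right aa bb ab ba power2_eq_square)
    have ny: "norm y = 1" using yy by (simp add: norm_eq_sqrt_inner)
    have "P *v y = c *\<^sub>R a" by (simp add: y_def matrix_vector_right_distrib matrix_vector_mult_scaleR Pa Pb)
    then have Py: "P *v y = (a \<bullet> y) *\<^sub>R a" by (simp only: ay)
    define Q where "Q = P - outer a a + outer y y"
    have Qg: "Q \<in> grass_proj (CARD('n) - r)" unfolding Q_def by (rule rotQ_props[OF P Pa na ny Py])
    have Qx: "Q *v x = P *v x - (a \<bullet> x) *\<^sub>R a + (y \<bullet> x) *\<^sub>R y" for x by (simp add: Q_def rotQ_mv)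
    have sndeq: "snd (tc ?A t) = Q"
    proof (rule matrix_eq[THEN iffD2], intro allI)
      fix x
      have yx: "y \<bullet> x = c * (a \<bullet> x) + s * (b \<bullet> x)" by (simp add: y_def inner_add_left)
      have L: "snd (tc ?A t) *v x = P *v x
          + (- (1/2) * (a \<bullet> x) + (1/2) * sin t * (b \<bullet> x) + (1/2) * cos t * (a \<bullet> x)) *\<^sub>R a
          + ((1/2) * (b \<bullet> x) + (1/2) * sin t * (a \<bullet> x) - (1/2) * cos t * (b \<bullet> x)) *\<^sub>R b"
        by (simp add: tc_def rot_coef_def matrix_vector_mult_add_rdistrib matrix_vector_mult_diff_rdistrib scaleR_mv
            algebra_simps)
      have R: "Q *v x = P *v x + (- (a \<bullet> x) + c * c * (a \<bullet> x) + c * s * (b \<bullet> x)) *\<^sub>R a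
          + (s * c * (a \<bullet> x) + s * s * (b \<bullet> x)) *\<^sub>R b"
        by (simp add: Qx yx y_def algebra_simps)
      have e1: "- (1/2) * (a \<bullet> x) + (1/2) * sin t * (b \<bullet> x) + (1/2) * cos t * (a \<bullet> x)
            = - (a \<bullet> x) + c * c * (a \<bullet> x) + c * s * (b \<bullet> x)"
        using cs1 unfolding sint cost by algebra
      have e2: "(1/2) * (b \<bullet> x) + (1/2) * sin t * (a \<bullet> x) - (1/2) * cos t * (b \<bullet> x)
            = s * c * (a \<bullet> x) + s * s * (b \<bullet> x)"
        using cs1 unfolding sint cost by algebra
      show "snd (tc ?A t) *v x = Q *v x" using L R e1 e2 by simp
    qed
    have Yv: "fst (tc ?A t) *v v = X *v v
        + (- (a \<bullet> v) + sin t * (b \<bullet> v) + cos t * (a \<bullet> v)) *\<^sub>R p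
        + ((b \<bullet> v) + sin t * (a \<bullet> v) - cos t * (b \<bullet> v)) *\<^sub>R q" for v
      by (simp add: tc_def rot_coef_def matrix_vector_mult_add_rdistrib matrix_vector_mult_diff_rdistrib scaleR_mv
            algebra_simps)
    have prod0: "fst (tc ?A t) *v (Q *v x) = 0" for x
    proof -
      have aQ: "a \<bullet> (Q *v x) = c * (y \<bullet> x)"
        by (simp add: Qx inner_add_right inner_diff_right aP aa ay)
      have bQ: "b \<bullet> (Q *v x) = s * (y \<bullet> x)"
        by (simp add: Qx inner_add_right inner_diff_right bP ba by')
      have XQ: "X *v (Q *v x) = (s * (y \<bullet> x)) *\<^sub>R (X *v b)"
        by (simp add: Qx y_def matrix_vector_right_distrib matrix_vector_mult_diff_distrib matrix_vector_mult_scaleR XPx Xa)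
      have f1: "- (c * (y \<bullet> x)) + sin t * (s * (y \<bullet> x)) + cos t * (c * (y \<bullet> x)) = 0"
        using cs1 unfolding sint cost by algebra
      have f2: "s * (y \<bullet> x) + sin t * (c * (y \<bullet> x)) - cos t * (s * (y \<bullet> x)) = 2 * (s * (y \<bullet> x))"
      proof -
        have "s * (y \<bullet> x) + sin t * (c * (y \<bullet> x)) - cos t * (s * (y \<bullet> x)) = s * (y \<bullet> x) * (1 + (c^2 + s^2))"
          unfolding sint cost by (simp add: power2_eq_square algebra_simps)
        then show ?thesis using cs1 by simp
      qed
      show ?thesis
        by (simp only: Yv aQ bQ XQ f1 f2) (simp add: q algebra_simps)
    qed
    show "tc ?A t \<in> desing r"
      using desingI[OF Qg, of "fst (tc ?A t)"] prod0 sndeq by (metis prod.collapse)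
  qed
  show "tc ?A 0 = (X, P)"
    by (simp add: tc_0 rot_coef_def algebra_simps scaleR_diff_right)
  show "fst (tc (dc ?A) 0) = outer p b + outer q a"
    by (simp add: tc_d0 rot_coef_def)
  show "fst (tc (dc (dc ?A)) 0) = outer q b - outer p a"
    by (simp add: tc_dd0 rot_coef_def)
qed


lemma bl_mv_left: "bounded_linear (\<lambda>M::real^'n^'m. M *v x)"
  by (rule bounded_linear_intro[where K="norm x"])
     (auto simp: matrix_vector_mult_add_rdistrib scaleR_mv norm_mv)

lemma tendsto_mv_left: fixes M :: "'a \<Rightarrow> real^'n^'m" shows "(M \<longlongrightarrow> L) F \<Longrightarrow> ((\<lambda>i. M i *v x) \<longlongrightarrow> L *v x) F"
  using bounded_linear.tendsto[OF bl_mv_left] by blast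

lemma tangent_rank_r:
  fixes X :: "real^'n^'m"
  assumes XP: "(X, P) \<in> desing r" and rn: "r < CARD('n)" and rX: "rank X = r"
    and W: "W \<in> tangent_cone (low_rank r) X" and Pa: "P *v a = a"
  shows "W *v a \<in> range (\<lambda>x. X *v x)"
proof (cases "a = 0")
  case True then show ?thesis by (metis matrix_vector_mult_0_right rangeI)
next
  case anz: False
  have P: "P \<in> grass_proj (CARD('n) - r)" using desingD[OF XP] by simp
  have kerX: "{x. X *v x = 0} = {x. P *v x = x}" using desing_rank(2)[OF XP rn rX] .
  have Xa: "X *v a = 0" using kerX Pa by auto
  let ?S = "{x. P *v x = 0}"
  have subS: "subspace ?S" by (rule subspace_ker)
  have injS: "\<forall>x\<in>?S. X *v x = 0 \<longrightarrow> x = 0"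
  proof (intro ballI impI)
    fix x assume "x \<in> ?S" "X *v x = 0"
    then have "x \<in> {x. X *v x = 0}" by simp
    then have "x \<in> {x. P *v x = x}" by (simp only: kerX)
    then show "x = 0" using \<open>x \<in> ?S\<close> by simp
  qed
  obtain c where c: "c > 0" "\<forall>x\<in>?S. c * norm x \<le> norm (X *v x)"
    using inj_bounded_below[OF subS injS] by blast
  have dS: "dim ?S = r" using proj_dim_ker[OF P] rn by simp
  have spS: "span ?S = ?S" using subS by (rule span_eq_iff[THEN iffD2])
  have anS: "a \<notin> span ?S"
  proof
    assume "a \<in> span ?S" then have "a \<in> ?S" by (simp only: spS)
    then show False using anz Pa by simp
  qed
  let ?T = "span (insert a ?S)"
  have dT: "dim ?T = r + 1" using dim_insert[of a ?S] anS dS by simp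
  obtain xs \<tau> where xs: "\<forall>i. xs i \<in> low_rank r" and tp: "\<forall>i. \<tau> i > 0" and t0: "\<tau> \<longlonglongrightarrow> 0"
    and Wl: "(\<lambda>i. (xs i - X) /\<^sub>R \<tau> i) \<longlonglongrightarrow> W"
    using W unfolding tangent_cone_def by blast
  define Wi where "Wi i = (xs i - X) /\<^sub>R \<tau> i" for i
  have Wl': "Wi \<longlonglongrightarrow> W" using Wl by (simp add: Wi_def[abs_def])
  have xsW: "xs i - X = \<tau> i *\<^sub>R Wi i" for i
  proof -
    have "\<tau> i \<noteq> 0" using tp by (metis less_irrefl)
    then show ?thesis by (simp add: Wi_def)
  qed
  have "(\<lambda>i. \<tau> i *\<^sub>R Wi i) \<longlonglongrightarrow> 0 *\<^sub>R W" by (intro tendsto_intros t0 Wl')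
  then have "(\<lambda>i. xs i - X) \<longlonglongrightarrow> 0" using xsW by simp
  then have "(\<lambda>i. norm (xs i - X)) \<longlonglongrightarrow> 0" by (rule tendsto_norm_zero)
  moreover have "(0::real) < c/2" using c(1) by simp
  ultimately have "eventually (\<lambda>i. norm (xs i - X) < c/2) sequentially"
    by (rule order_tendstoD(2))
  then have ev: "eventually (\<lambda>i. norm (xs i - X) < c/2 \<and> (\<exists>b\<in>?S. xs i *v (a + b) = 0)) sequentially"
  proof eventually_elim
    case (elim i)
    have rk: "rank (xs i) \<le> r" using xs by (simp add: low_rank_def)
    have "\<not> (\<forall>x\<in>?T. xs i *v x = 0 \<longrightarrow> x = 0)"
    proof
      assume "\<forall>x\<in>?T. xs i *v x = 0 \<longrightarrow> x = 0"
      then have "dim ?T \<le> rank (xs i)" by (rule rank_ge_inj[OF subspace_span])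
      then show False using dT rk by simp
    qed
    then obtain z where z: "z \<in> ?T" "xs i *v z = 0" "z \<noteq> 0" by blast
    obtain k where k: "z - k *\<^sub>R a \<in> span ?S" using z(1) span_breakdown_eq[of z a ?S] by blast
    then have kS: "z - k *\<^sub>R a \<in> ?S" by (simp only: spS)
    have "k \<noteq> 0"
    proof
      assume k0: "k = 0"
      then have zS: "z \<in> ?S" using kS by simp
      have "(c - norm (xs i - X)) * norm z \<le> norm (xs i *v z)" by (rule perturb_below[OF c(2) zS])
      then have "(c - norm (xs i - X)) * norm z \<le> 0" using z by simp
      moreover have "c - norm (xs i - X) > 0" using elim c by simp
      ultimately have "norm z \<le> 0" by (simp add: mult_le_0_iff)
      then show False using z(3) by simp
    qed
    define b where "b = (1/k) *\<^sub>R (z - k *\<^sub>R a)"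
    have bS: "b \<in> ?S" unfolding b_def using kS by (simp add: matrix_vector_mult_scaleR)
    have "a + b = (1/k) *\<^sub>R z" using \<open>k \<noteq> 0\<close> by (simp add: b_def algebra_simps)
    then have "xs i *v (a + b) = 0" using z by (simp add: matrix_vector_mult_scaleR)
    then show ?case using elim bS by blast
  qed
  define b where "b i = (SOME b. b \<in> ?S \<and> xs i *v (a + b) = 0)" for i
  have evb: "eventually (\<lambda>i. norm (xs i - X) < c/2 \<and> b i \<in> ?S \<and> xs i *v (a + b i) = 0) sequentially"
    using ev
  proof eventually_elim
    case (elim i)
    then have "\<exists>b. b \<in> ?S \<and> xs i *v (a + b) = 0" by blast
    then have "b i \<in> ?S \<and> xs i *v (a + b i) = 0" unfolding b_def by (rule someI_ex)
    then show ?case using elim by blast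
  qed
  have evbd: "eventually (\<lambda>i. norm (b i) \<le> (2/c) * (\<tau> i * norm (Wi i *v a))) sequentially"
    using evb
  proof eventually_elim
    case (elim i)
    have "(c - norm (xs i - X)) * norm (b i) \<le> norm (xs i *v b i)" by (rule perturb_below[OF c(2)]) (use elim in auto)
    moreover have "xs i *v b i = - (xs i *v a)" using elim by (simp add: matrix_vector_right_distrib add_eq_0_iff)
    moreover have "xs i *v a = \<tau> i *\<^sub>R (Wi i *v a)"
    proof -
      have "xs i *v a = (xs i - X) *v a" using Xa by (simp add: matrix_vector_mult_diff_rdistrib)
      then show ?thesis by (simp add: xsW scaleR_mv)
    qed
    ultimately have "(c - norm (xs i - X)) * norm (b i) \<le> \<tau> i * norm (Wi i *v a)"
      using tp by (simp add: abs_of_pos)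
    moreover have "(c/2) * norm (b i) \<le> (c - norm (xs i - X)) * norm (b i)"
      using elim by (intro mult_right_mono) auto
    ultimately have "(c/2) * norm (b i) \<le> \<tau> i * norm (Wi i *v a)" by linarith
    then show ?case using c(1) by (simp add: field_simps)
  qed
  have key: "eventually (\<lambda>i. X *v ((1 / \<tau> i) *\<^sub>R b i) = - (Wi i *v a) - Wi i *v b i) sequentially"
    using evb
  proof eventually_elim
    case (elim i)
    have "X *v b i = xs i *v b i - (xs i - X) *v b i" by (simp add: matrix_vector_mult_diff_rdistrib)
    also have "xs i *v b i = - (xs i *v a)" using elim by (simp add: matrix_vector_right_distrib add_eq_0_iff)
    also have "xs i *v a = (xs i - X) *v a" using Xa by (simp add: matrix_vector_mult_diff_rdistrib)
    finally have "X *v b i = - (\<tau> i *\<^sub>R (Wi i *v a)) - \<tau> i *\<^sub>R (Wi i *v b i)"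
      by (simp add: xsW scaleR_mv)
    then have "(1/\<tau> i) *\<^sub>R (X *v b i) = (1/\<tau> i) *\<^sub>R (- (\<tau> i *\<^sub>R (Wi i *v a)) - \<tau> i *\<^sub>R (Wi i *v b i))"
      by simp
    also have "\<dots> = - (Wi i *v a) - Wi i *v b i"
    proof -
      have "\<tau> i \<noteq> 0" using tp by (metis less_irrefl)
      then show ?thesis by (simp add: scaleR_diff_right)
    qed
    finally show ?case by (simp add: matrix_vector_mult_scaleR)
  qed
  have lim1: "(\<lambda>i. Wi i *v a) \<longlonglongrightarrow> W *v a" by (rule tendsto_mv_left[OF Wl'])
  have lim2: "(\<lambda>i. Wi i *v b i) \<longlonglongrightarrow> 0"
  proof (rule Lim_null_comparison)
    show "eventually (\<lambda>i. norm (Wi i *v b i) \<le> norm (Wi i) * ((2/c) * (\<tau> i * norm (Wi i *v a)))) sequentially"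
      using evbd
    proof eventually_elim
      case (elim i)
      have "norm (Wi i *v b i) \<le> norm (Wi i) * norm (b i)" by (rule norm_mv)
      also have "\<dots> \<le> norm (Wi i) * ((2/c) * (\<tau> i * norm (Wi i *v a)))"
        using elim by (intro mult_left_mono) auto
      finally show ?case .
    qed
    have "(\<lambda>i. norm (Wi i) * ((2/c) * (\<tau> i * norm (Wi i *v a)))) \<longlonglongrightarrow> norm W * ((2/c) * (0 * norm (W *v a)))"
      by (intro tendsto_intros Wl' t0 lim1)
    then show "(\<lambda>i. norm (Wi i) * ((2/c) * (\<tau> i * norm (Wi i *v a)))) \<longlonglongrightarrow> 0" by simp
  qed
  have "(\<lambda>i. - (Wi i *v a) - Wi i *v b i) \<longlonglongrightarrow> - (W *v a) - 0"
    by (intro tendsto_intros lim1 lim2)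
  then have lim3: "(\<lambda>i. X *v ((1 / \<tau> i) *\<^sub>R b i)) \<longlonglongrightarrow> - (W *v a)"
    using key by (simp add: tendsto_cong)
  have "- (W *v a) \<in> range (\<lambda>x. X *v x)"
    by (rule Lim_in_closed_set[OF closed_subspace[OF subspace_range_mv] _ _ lim3]) auto
  then obtain z where "- (W *v a) = X *v z" by auto
  moreover have "X *v (- z) = - (X *v z)" using matrix_vector_mult_diff_distrib[of X 0 z] by simp
  ultimately have "W *v a = X *v (- z)" by (metis minus_minus)
  then show ?thesis by auto
qed


lemma stat_rank_r:
  fixes X :: "real^'n^'m"
  assumes XP: "(X, P) \<in> desing r" and rn: "r < CARD('n)" and rX: "rank X = r"
    and G1: "\<And>c d. P *v d = 0 \<Longrightarrow> inner G (outer c d) = 0"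
    and G2: "\<And>x a. x \<in> range (\<lambda>z. X *v z) \<Longrightarrow> P *v a = a \<Longrightarrow> inner G (outer x a) = 0"
    and W: "W \<in> tangent_cone (low_rank r) X"
  shows "inner G W = 0"
proof -
  have P: "P \<in> grass_proj (CARD('n) - r)" using desingD[OF XP] by simp
  have Ps: "transpose P = P" and Pi: "P ** P = P" using grass_projD[OF P] by auto
  have GP: "G *v e = G *v (P *v e)" for e
  proof -
    have "P *v (e - P *v e) = 0" by (simp add: matrix_vector_mult_diff_distrib proj_idem[OF Pi])
    then have "inner G (outer (G *v (e - P *v e)) (e - P *v e)) = 0" by (rule G1)
    then have "G *v (e - P *v e) = 0" by (simp add: inner_outer)
    then show ?thesis by (simp add: matrix_vector_mult_diff_distrib)
  qed
  have GeqGP: "G = G ** P" by (simp add: matrix_eq matrix_vector_mul_assoc[symmetric] GP[symmetric])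
  have "inner G W = inner (G ** P) W" using GeqGP by simp
  also have "\<dots> = inner G (W ** P)" by (simp add: inner_mult_transpose Ps)
  also have "\<dots> = (\<Sum>j\<in>UNIV. (G *v axis j 1) \<bullet> ((W ** P) *v axis j 1))" by (rule inner_columns)
  also have "\<dots> = 0"
  proof (rule sum.neutral, intro ballI)
    fix j :: 'n
    let ?e = "P *v axis j 1"
    have Pe: "P *v ?e = ?e" by (rule proj_idem[OF Pi])
    have Wr: "W *v ?e \<in> range (\<lambda>z. X *v z)" by (rule tangent_rank_r[OF XP rn rX W Pe])
    have "(G *v axis j 1) \<bullet> ((W ** P) *v axis j 1) = (W *v ?e) \<bullet> (G *v ?e)"
      using GP[of "axis j 1"] by (simp add: matrix_vector_mul_assoc[symmetric] inner_commute)
    also have "\<dots> = inner G (outer (W *v ?e) ?e)" by (simp add: inner_outer)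
    also have "\<dots> = 0" by (rule G2[OF Wr Pe])
    finally show "(G *v axis j 1) \<bullet> ((W ** P) *v axis j 1) = 0" .
  qed
  finally show ?thesis .
qed

lemma one_to_one_rank_r:
  fixes X :: "real^'n^'m"
  assumes XP: "(X, P) \<in> desing r" and rn: "r < CARD('n)" and rX: "rank X = r"
    and fd: "\<forall>x. f differentiable (at x)" and cr: "crit1 (desing r) (f \<circ> fst) (X, P)"
  shows "stationary_on (low_rank r) f X"
proof -
  obtain L where L: "(f has_derivative L) (at X)" using fd by (auto simp: differentiable_def)
  define G where "G = grad f X"
  have LG: "L = (\<lambda>v. inner G v)" using grad_exists(2)[OF L] by (simp add: G_def)
  have P: "P \<in> grass_proj (CARD('n) - r)" using desingD[OF XP] by simp
  have Ps: "transpose P = P" and Pi: "P ** P = P" using grass_projD[OF P] by auto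
  have Psym: "(P *v u) \<bullet> v = u \<bullet> (P *v v)" for u v by (rule proj_sym_inner[OF Ps])
  have L': "(f has_derivative L) (at (fst (X, P)))" using L by simp
  have G1: "inner G (outer c d) = 0" if Pd: "P *v d = 0" for c d
  proof -
    have V: "\<forall>x. outer c d *v (P *v x) = 0" using Psym[of d] Pd by (simp add: inner_commute)
    have "L (fst (tc (dc (lin_coef X P (outer c d))) 0)) = 0"
      by (rule crit1_tc[OF cr lin_curve(1)[OF XP V] lin_curve(2)[OF XP V] L'])
    then show ?thesis using lin_curve(3)[OF XP V] LG by simp
  qed
  have G2: "inner G (outer x a) = 0" if xr: "x \<in> range (\<lambda>z. X *v z)" and Pa: "P *v a = a" for x a
  proof -
    obtain z where xz: "x = X *v z" using xr by auto
    define b1 where "b1 = z - P *v z"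
    have Xb1: "X *v b1 = x"
      using desingD(2)[OF XP, of z] by (simp add: b1_def xz matrix_vector_mult_diff_distrib)
    have Pb1: "P *v b1 = 0" by (simp add: b1_def matrix_vector_mult_diff_distrib proj_idem[OF Pi])
    show ?thesis
    proof (cases "b1 = 0 \<or> a = 0")
      case True
      then show ?thesis using Xb1 by auto
    next
      case False
      then have b1nz: "b1 \<noteq> 0" and anz: "a \<noteq> 0" by auto
      define a' where "a' = (1 / norm a) *\<^sub>R a"
      define b where "b = (1 / norm b1) *\<^sub>R b1"
      define q where "q = - (1/2) *\<^sub>R (X *v b)"
      have Pa': "P *v a' = a'" by (simp add: a'_def matrix_vector_mult_scaleR Pa)
      have Pb: "P *v b = 0" by (simp add: b_def matrix_vector_mult_scaleR Pb1)
      have na: "norm a' = 1" using anz by (simp add: a'_def)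
      have nb: "norm b = 1" using b1nz by (simp add: b_def)
      note RC = rot_curve[OF XP Pa' Pb na nb q_def, of 0]
      have "L (fst (tc (dc (rot_coef X P a' b 0 q)) 0)) = 0"
        by (rule crit1_tc[OF cr RC(1) RC(2) L'])
      then have "inner G (outer q a') = 0" using RC(3) LG by simp
      moreover have "outer q a' = (- (1/2) * (1 / norm b1) * (1 / norm a)) *\<^sub>R outer x a"
        by (simp add: q_def b_def a'_def matrix_vector_mult_scaleR Xb1 outer_simps)
      ultimately have "(- (1/2) * (1 / norm b1) * (1 / norm a)) * inner G (outer x a) = 0" by simp
      then show ?thesis using b1nz anz by simp
    qed
  qed
  have "\<forall>W \<in> tangent_cone (low_rank r) X. inner G W = 0"
    using stat_rank_r[OF XP rn rX G1 G2] by blast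
  then show ?thesis unfolding stationary_on_def dual_cone_def G_def by simp
qed


lemma exists_unit_perp:
  fixes X :: "real^'n^'m"
  assumes "rank X < CARD('m)"
  shows "\<exists>u. norm u = 1 \<and> (\<forall>x. u \<bullet> (X *v x) = 0)"
proof -
  have "dim {x. transpose X *v x = 0} + rank X = CARD('m)"
    using rank_nullity[of "transpose X"] rank_transpose[of X] by simp
  then have "dim {x. transpose X *v x = 0} \<noteq> 0" using assms by linarith
  then obtain u0 where u0: "transpose X *v u0 = 0" "u0 \<noteq> 0" by (auto simp: dim_eq_0)
  define u where "u = (1 / norm u0) *\<^sub>R u0"
  have "norm u = 1" using u0 by (simp add: u_def)
  moreover have "u \<bullet> (X *v x) = 0" for x
    by (simp add: u_def inner_mv_transpose[of _ X] matrix_vector_mult_scaleR u0 del: transpose_matrix_vector)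
  ultimately show ?thesis by blast
qed

lemma exists_unit_fix:
  fixes P :: "real^'n^'n"
  assumes "P \<in> grass_proj k" "0 < k"
  shows "\<exists>v. norm v = 1 \<and> P *v v = v"
proof -
  have "dim {x. P *v x = x} \<noteq> 0" using proj_dim_fix[OF assms(1)] assms(2) by simp
  then obtain v0 where v0: "P *v v0 = v0" "v0 \<noteq> 0" by (auto simp: dim_eq_0)
  define v where "v = (1 / norm v0) *\<^sub>R v0"
  have "norm v = 1" using v0 by (simp add: v_def)
  moreover have "P *v v = v" by (simp add: v_def matrix_vector_mult_scaleR v0)
  ultimately show ?thesis by blast
qed

lemma exists_w:
  fixes X :: "real^'n^'m"
  assumes XP: "(X, P) \<in> desing r" and rn: "r < CARD('n)" and rX: "rank X < r"
  shows "\<exists>w. norm w = 1 \<and> X *v w = 0 \<and> P *v w = 0"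
proof -
  have P: "P \<in> grass_proj (CARD('n) - r)" using desingD[OF XP] by simp
  have Pi: "P ** P = P" using grass_projD[OF P] by auto
  have "\<not> {x. X *v x = 0} \<subseteq> {x. P *v x = x}"
  proof
    assume "{x. X *v x = 0} \<subseteq> {x. P *v x = x}"
    then have "dim {x. X *v x = 0} \<le> dim {x. P *v x = x}" by (rule dim_subset)
    then show False using proj_dim_fix[OF P] rank_nullity[of X] rX rn by linarith
  qed
  then obtain w0 where w0: "X *v w0 = 0" "P *v w0 \<noteq> w0" by auto
  define w1 where "w1 = w0 - P *v w0"
  have w1nz: "w1 \<noteq> 0" using w0 by (simp add: w1_def)
  have Xw1: "X *v w1 = 0" using w0 desingD(2)[OF XP, of w0] by (simp add: w1_def matrix_vector_mult_diff_distrib)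
  have Pw1: "P *v w1 = 0" by (simp add: w1_def matrix_vector_mult_diff_distrib proj_idem[OF Pi])
  define w where "w = (1 / norm w1) *\<^sub>R w1"
  have "norm w = 1" using w1nz by (simp add: w_def)
  moreover have "X *v w = 0" "P *v w = 0" by (simp_all add: w_def matrix_vector_mult_scaleR Xw1 Pw1)
  ultimately show ?thesis by blast
qed

lemma uv_identity:
  assumes YQ: "(Y, Q) \<in> desing r" and u: "\<forall>x. u \<bullet> (X *v x) = 0" and Pv: "P *v v = v"
  shows "inner (outer u v) Y = u \<bullet> ((Y - X) *v ((P - Q) *v v))"
proof -
  have "(Y - X) *v ((P - Q) *v v) = Y *v v - Y *v (Q *v v) - X *v ((P - Q) *v v)"
    by (simp add: matrix_vector_mult_diff_rdistrib matrix_vector_mult_diff_distrib Pv)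
  then have "u \<bullet> ((Y - X) *v ((P - Q) *v v)) = u \<bullet> (Y *v v)"
    using desingD(2)[OF YQ, of v] u by (simp add: inner_diff_right)
  then show ?thesis by (simp add: inner_commute[of "outer u v"] inner_outer)
qed

lemma bb_uv: "bounded_bilinear (\<lambda>(M::real^'n^'m) (N::real^'n^'n). u \<bullet> (M *v (N *v v)))"
proof (rule bounded_bilinear.intro)
  show "\<exists>K. \<forall>M N. norm (u \<bullet> ((M::real^'n^'m) *v ((N::real^'n^'n) *v v))) \<le> norm M * norm N * K"
  proof (intro exI[of _ "norm u * norm v"] allI)
    fix M :: "real^'n^'m" and N :: "real^'n^'n"
    have "norm (u \<bullet> (M *v (N *v v))) \<le> norm u * norm (M *v (N *v v))"
      by (simp add: Cauchy_Schwarz_ineq2)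
    also have "\<dots> \<le> norm u * (norm M * (norm N * norm v))"
      by (intro mult_left_mono order_trans[OF norm_mv] mult_left_mono norm_mv) auto
    finally show "norm (u \<bullet> (M *v (N *v v))) \<le> norm M * norm N * (norm u * norm v)" by (simp add: mult_ac)
  qed
qed (simp_all add: matrix_vector_mult_add_rdistrib matrix_vector_right_distrib scaleR_mv matrix_vector_mult_scaleR
      inner_add_right)

lemma quad_zero: assumes "\<forall>\<beta>::real. \<beta> * \<beta> * K - \<beta> * L \<ge> 0" shows "L = 0"
proof -
  define m where "m = \<bar>K\<bar> + 1"
  have m: "m > 0" by (simp add: m_def)
  define \<beta> where "\<beta> = L / m"
  have Lb: "L = \<beta> * m" using m by (simp add: \<beta>_def)
  have "\<beta> * \<beta> * K \<le> \<beta> * \<beta> * \<bar>K\<bar>" by (intro mult_left_mono) auto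
  then have "\<beta> * \<beta> * K - \<beta> * L \<le> - (\<beta> * \<beta>)" by (simp add: Lb m_def algebra_simps)
  moreover have "\<beta> * \<beta> * K - \<beta> * L \<ge> 0" using assms by blast
  ultimately have "\<beta> * \<beta> \<le> 0" by linarith
  then have "\<beta> = 0" by (metis mult_le_0_iff mult_eq_0_iff order_antisym zero_le_square)
  then show ?thesis using Lb by simp
qed


lemma tangent_outer:
  fixes X :: "real^'n^'m"
  assumes rX: "rank X < r"
  shows "- outer u v \<in> tangent_cone (low_rank r) X"
  unfolding tangent_cone_def
proof (intro CollectI exI conjI allI)
  let ?\<tau> = "\<lambda>i::nat. inverse (real (Suc i))"
  let ?xs = "\<lambda>i. X + outer ((- ?\<tau> i) *\<^sub>R u) v"
  fix i
  show "?xs i \<in> low_rank r"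
    using rank_add_le[of X "outer ((- ?\<tau> i) *\<^sub>R u) v"] rank_outer_le[of "(- ?\<tau> i) *\<^sub>R u" v] rX
    by (simp add: low_rank_def)
  show "?\<tau> i > 0" by simp
next
  let ?\<tau> = "\<lambda>i::nat. inverse (real (Suc i))"
  let ?xs = "\<lambda>i. X + outer ((- ?\<tau> i) *\<^sub>R u) v"
  show "?\<tau> \<longlonglongrightarrow> 0" by (rule LIMSEQ_inverse_real_of_nat)
  have "(?xs i - X) /\<^sub>R ?\<tau> i = - outer u v" for i by (simp add: outer_simps)
  then show "(\<lambda>i. (?xs i - X) /\<^sub>R ?\<tau> i) \<longlonglongrightarrow> - outer u v" by simp
qed

lemma not_one_to_one_low:
  fixes X :: "real^'n^'m"
  assumes XP: "(X, P) \<in> desing r" and rn: "r < CARD('n)" and rm: "r < CARD('m)" and rX: "rank X < r"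
  shows "\<not> one_to_one (desing r) fst (low_rank r) (X, P)"
proof
  assume oto: "one_to_one (desing r) fst (low_rank r) (X, P)"
  have P: "P \<in> grass_proj (CARD('n) - r)" using desingD[OF XP] by simp
  obtain u where u: "norm u = 1" "\<forall>x. u \<bullet> (X *v x) = 0" using exists_unit_perp[of X] rX rm by auto
  obtain v where v: "norm v = 1" "P *v v = v" using exists_unit_fix[OF P] rn by auto
  define f where "f = (\<lambda>Y::real^'n^'m. inner (outer u v) Y)"
  have fd: "(f has_derivative (\<lambda>Y. inner (outer u v) Y)) (at Y)" for Y
    unfolding f_def by (rule bounded_linear_imp_has_derivative[OF bounded_linear_inner_right])
  have fdiff: "\<forall>x. f differentiable (at x)" using fd by (auto simp: differentiable_def)
  have cr: "crit1 (desing r) (f \<circ> fst) (X, P)"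
    unfolding crit1_def
  proof (intro allI impI, elim conjE)
    fix c assume sc: "smooth_curve_in (desing r) c" and c0: "c 0 = (X, P)"
    obtain D where D: "D 0 = c" "\<forall>k t. (D k has_vector_derivative D (Suc k) t) (at t)" and cin: "\<forall>t. c t \<in> desing r"
      using sc unfolding smooth_curve_in_def by blast
    have dc: "(c has_vector_derivative D 1 0) (at 0)" using D by (metis One_nat_def)
    define B where "B = (\<lambda>(M::real^'n^'m) (N::real^'n^'n). u \<bullet> (M *v (N *v v)))"
    have bb: "bounded_bilinear B" unfolding B_def by (rule bb_uv)
    define h where "h = (\<lambda>t. B (fst (c t) - X) (P - snd (c t)))"
    have heq: "(f \<circ> fst) \<circ> c = h"
    proof
      fix t
      have "(fst (c t), snd (c t)) \<in> desing r" using cin by simp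
      then show "((f \<circ> fst) \<circ> c) t = h t"
        unfolding h_def B_def f_def o_def using uv_identity[OF _ u(2) v(2)] by blast
    qed
    have d1: "((\<lambda>t. fst (c t) - X) has_vector_derivative fst (D 1 0) - 0) (at 0)"
      by (intro has_vector_derivative_diff bounded_linear.has_vector_derivative[OF bounded_linear_fst dc]
          has_vector_derivative_const)
    have d2: "((\<lambda>t. P - snd (c t)) has_vector_derivative 0 - snd (D 1 0)) (at 0)"
      by (intro has_vector_derivative_diff bounded_linear.has_vector_derivative[OF bounded_linear_snd dc]
          has_vector_derivative_const)
    have "(h has_vector_derivative (B (fst (c 0) - X) (0 - snd (D 1 0)) + B (fst (D 1 0) - 0) (P - snd (c 0)))) (at 0)"
      unfolding h_def by (rule bounded_bilinear.has_vector_derivative[OF bb d1 d2])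
    then have "(h has_vector_derivative 0) (at 0)"
      using c0 bounded_bilinear.zero_left[OF bb] bounded_bilinear.zero_right[OF bb] by simp
    then have "(h has_field_derivative 0) (at 0)" by (simp add: has_real_derivative_iff_has_vector_derivative)
    then show "deriv ((f \<circ> fst) \<circ> c) 0 = 0" using heq DERIV_imp_deriv by metis
  qed
  have st: "stationary_on (low_rank r) f X"
    using oto fdiff cr unfolding one_to_one_def by auto
  have g: "grad f X = outer u v" by (rule grad_eq[OF fd])
  have "inner (outer u v) (- outer u v) \<ge> 0"
    using st tangent_outer[OF rX, of u v] unfolding stationary_on_def dual_cone_def g by blast
  moreover have "inner (outer u v) (- outer u v) = -1"
    using u v by (simp add: inner_outer_outer dot_square_norm norm_outer)
  ultimately show False by simp
qed

lemma not_local_low: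
  fixes X :: "real^'n^'m"
  assumes XP: "(X, P) \<in> desing r" and rn: "r < CARD('n)" and rm: "r < CARD('m)" and rX: "rank X < r"
  shows "\<not> local_to_local (desing r) fst (low_rank r) (X, P)"
proof
  assume ltl: "local_to_local (desing r) fst (low_rank r) (X, P)"
  have P: "P \<in> grass_proj (CARD('n) - r)" using desingD[OF XP] by simp
  obtain u where u: "norm u = 1" "\<forall>x. u \<bullet> (X *v x) = 0" using exists_unit_perp[of X] rX rm by auto
  obtain v where v: "norm v = 1" "P *v v = v" using exists_unit_fix[OF P] rn by auto
  define f where "f = (\<lambda>Y::real^'n^'m. (1/2) * norm (Y - X) - inner (outer u v) Y)"
  have fcont: "continuous_on (low_rank r) f" unfolding f_def by (intro continuous_intros)
  have fX: "f X = 0" using u(2) by (simp add: f_def inner_commute[of "outer u v"] inner_outer)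
  have lm: "loc_min_on (desing r) (f \<circ> fst) (X, P)"
    unfolding loc_min_on_def
  proof (intro conjI exI[of _ "1/2"] ballI impI)
    show "(X, P) \<in> desing r" by fact
    show "(0::real) < 1/2" by simp
    fix z assume zin: "z \<in> desing r" and dz: "dist z (X, P) < 1/2"
    obtain Y Q where z: "z = (Y, Q)" by (cases z)
    have YQ: "(Y, Q) \<in> desing r" using zin z by simp
    have "norm (Q - P) \<le> dist z (X, P)" using dist_snd_le[of z "(X, P)"] z by (simp add: dist_norm)
    then have nQP: "norm (P - Q) \<le> 1/2" using dz by (simp add: norm_minus_commute)
    have "inner (outer u v) Y = u \<bullet> ((Y - X) *v ((P - Q) *v v))" by (rule uv_identity[OF YQ u(2) v(2)])
    also have "\<dots> \<le> norm u * norm ((Y - X) *v ((P - Q) *v v))" by (rule Cauchy_Schwarz_ineq2[THEN order_trans[OF abs_ge_self]])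
    also have "\<dots> \<le> norm (Y - X) * (norm (P - Q) * norm v)"
      using u(1) by (simp add: order_trans[OF norm_mv] mult_left_mono norm_mv)
    also have "\<dots> \<le> norm (Y - X) * (1/2)" using v(1) nQP by (intro mult_left_mono) auto
    finally have "inner (outer u v) Y \<le> (1/2) * norm (Y - X)" by simp
    then show "(f \<circ> fst) (X, P) \<le> (f \<circ> fst) z" using fX z by (simp add: f_def)
  qed
  then have "loc_min_on (low_rank r) f X" using ltl fcont unfolding local_to_local_def by auto
  then obtain e where e: "e > 0" "\<forall>Z\<in>low_rank r. dist Z X < e \<longrightarrow> f X \<le> f Z"
    unfolding loc_min_on_def by blast
  define Z where "Z = X + outer ((e/2) *\<^sub>R u) v"
  have Zr: "Z \<in> low_rank r"
    using rank_add_le[of X "outer ((e/2) *\<^sub>R u) v"] rank_outer_le[of "(e/2) *\<^sub>R u" v] rX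
    by (simp add: low_rank_def Z_def)
  have nZ: "norm (Z - X) = e/2" using u v e by (simp add: Z_def norm_outer)
  then have "dist Z X < e" using e by (simp add: dist_norm)
  then have "f X \<le> f Z" using e Zr by blast
  moreover have "inner (outer u v) Z = e/2"
    using u v e by (simp add: Z_def inner_add_right inner_outer_outer dot_square_norm outer_simps norm_outer
        inner_commute[of "outer u v" X] inner_outer)
  ultimately show False using fX nZ e by (simp add: f_def)
qed


lemma two_to_one_all:
  fixes X :: "real^'n^'m"
  assumes XP: "(X, P) \<in> desing r" and rn: "r < CARD('n)"
  shows "two_to_one (desing r) fst (low_rank r) (X, P)"
  unfolding two_to_one_def
proof (intro allI impI)
  fix f :: "real^'n^'m \<Rightarrow> real"
  assume td: "twice_differentiable f" and cr2: "crit2 (desing r) (f \<circ> fst) (X, P)"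
  obtain Df :: "real^'n^'m \<Rightarrow> (real^'n^'m) \<Rightarrow>\<^sub>L real" where
    Df: "\<forall>x. (f has_derivative blinfun_apply (Df x)) (at x)" and Dfd: "\<forall>x. Df differentiable at x"
    using td unfolding twice_differentiable_def by blast
  have cr1: "crit1 (desing r) (f \<circ> fst) (X, P)" using cr2 by (simp add: crit2_def)
  have fdiff: "\<forall>x. f differentiable (at x)" using Df by (auto simp: differentiable_def)
  have rle: "rank X \<le> r" by (rule desing_rank(1)[OF XP rn])
  show "stationary_on (low_rank r) f (fst (X, P))"
  proof (cases "rank X = r")
    case True
    then show ?thesis using one_to_one_rank_r[OF XP rn True fdiff cr1] by simp
  next
    case False
    then have rX: "rank X < r" using rle by simp
    have P: "P \<in> grass_proj (CARD('n) - r)" using desingD[OF XP] by simp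
    have Ps: "transpose P = P" and Pi: "P ** P = P" using grass_projD[OF P] by auto
    have Psym: "(P *v u) \<bullet> v = u \<bullet> (P *v v)" for u v by (rule proj_sym_inner[OF Ps])
    define G where "G = grad f X"
    have LG: "blinfun_apply (Df X) = (\<lambda>v. inner G v)" using grad_exists(2)[OF Df[rule_format, of X]] by (simp add: G_def)
    obtain DDf where DDf: "(Df has_derivative DDf) (at X)" using Dfd by (auto simp: differentiable_def)
    have DDlin: "linear DDf" by (rule has_derivative_linear[OF DDf])
    have L': "(f has_derivative blinfun_apply (Df X)) (at (fst (X, P)))" using Df by simp
    have DDf': "(Df has_derivative DDf) (at (fst (X, P)))" using DDf by simp
    have G1: "G *v d = 0" if Pd: "P *v d = 0" for d
    proof -
      let ?c = "G *v d"
      have V: "\<forall>x. outer ?c d *v (P *v x) = 0" using Psym[of d] Pd by (simp add: inner_commute)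
      have "blinfun_apply (Df X) (fst (tc (dc (lin_coef X P (outer ?c d))) 0)) = 0"
        by (rule crit1_tc[OF cr1 lin_curve(1)[OF XP V] lin_curve(2)[OF XP V] L'])
      then have "inner G (outer ?c d) = 0" using lin_curve(3)[OF XP V] LG by simp
      then show ?thesis by (simp add: inner_outer)
    qed
    obtain w where w: "norm w = 1" "X *v w = 0" "P *v w = 0" using exists_w[OF XP rn rX] by blast
    have G2: "G *v v = 0" if nv: "norm v = 1" and Pv: "P *v v = v" for v
    proof -
      have "inner G (outer p0 v) = 0" for p0
      proof -
        have "\<forall>\<beta>::real. \<beta> * \<beta> * blinfun_apply (DDf (outer p0 w)) (outer p0 w) - \<beta> * inner G (outer p0 v) \<ge> 0"
        proof
          fix \<beta> :: real
          have q: "(0::real^'m) = - (1/2) *\<^sub>R (X *v w)" using w by simp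
          note RC = rot_curve[OF XP Pv w(3) nv w(1) q, of "\<beta> *\<^sub>R p0"]
          have "blinfun_apply (DDf (fst (tc (dc (rot_coef X P v w (\<beta> *\<^sub>R p0) 0)) 0))) (fst (tc (dc (rot_coef X P v w (\<beta> *\<^sub>R p0) 0)) 0))
             + blinfun_apply (Df (fst (X, P))) (fst (tc (dc (dc (rot_coef X P v w (\<beta> *\<^sub>R p0) 0))) 0)) \<ge> 0"
            by (rule crit2_tc[OF cr2 RC(1) RC(2) Df DDf'])
          then have "blinfun_apply (DDf (\<beta> *\<^sub>R outer p0 w)) (\<beta> *\<^sub>R outer p0 w) + inner G (- (\<beta> *\<^sub>R outer p0 v)) \<ge> 0"
            using RC(3,4) LG by (simp add: outer_simps)
          moreover have "DDf (\<beta> *\<^sub>R outer p0 w) = \<beta> *\<^sub>R DDf (outer p0 w)" by (rule linear_scale[OF DDlin])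
          ultimately show "\<beta> * \<beta> * blinfun_apply (DDf (outer p0 w)) (outer p0 w) - \<beta> * inner G (outer p0 v) \<ge> 0"
            by (simp add: blinfun.scaleR_right blinfun.scaleR_left algebra_simps)
        qed
        then show ?thesis by (rule quad_zero)
      qed
      from this[of "G *v v"] show ?thesis by (simp add: inner_outer)
    qed
    have G0: "G = 0"
    proof (rule matrix_eq[THEN iffD2], intro allI)
      fix e :: "real^'n"
      have "G *v (e - P *v e) = 0" by (rule G1) (simp add: matrix_vector_mult_diff_distrib proj_idem[OF Pi])
      moreover have "G *v (P *v e) = 0"
      proof (cases "P *v e = 0")
        case True then show ?thesis by simp
      next
        case False
        define v where "v = (1 / norm (P *v e)) *\<^sub>R (P *v e)"
        have "norm v = 1" using False by (simp add: v_def)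
        moreover have "P *v v = v" by (simp add: v_def matrix_vector_mult_scaleR proj_idem[OF Pi])
        ultimately have "G *v v = 0" by (rule G2)
        then show ?thesis using False by (simp add: v_def matrix_vector_mult_scaleR)
      qed
      ultimately show "G *v e = 0 *v e" by (simp add: matrix_vector_mult_diff_distrib)
    qed
    show ?thesis unfolding stationary_on_def dual_cone_def by (simp add: G_def[symmetric] G0)
  qed
qed


lemma exists_proj_in_ker:
  fixes Y :: "real^'n^'m"
  assumes "rank Y \<le> r" "r \<le> CARD('n)"
  shows "\<exists>Q. Q \<in> grass_proj (CARD('n) - r) \<and> (\<forall>x. Y *v (Q *v x) = 0)"
proof -
  let ?K = "{x. Y *v x = 0}"
  obtain B where B: "B \<subseteq> ?K" "pairwise orthogonal B" "\<And>x. x \<in> B \<Longrightarrow> norm x = 1"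
    "independent B" "card B = dim ?K" "span B = ?K"
    using orthonormal_basis_subspace[OF subspace_ker] by metis
  have "CARD('n) - r \<le> card B" using B(5) rank_nullity[of Y] assms by linarith
  then obtain B' where B': "B' \<subseteq> B" "card B' = CARD('n) - r" "finite B'" by (rule obtain_subset_with_card_n)
  have orth: "b \<bullet> c = 0" if "b \<in> B'" "c \<in> B'" "b \<noteq> c" for b c
    using B(2) B'(1) that unfolding pairwise_def orthogonal_def by blast
  have nb: "b \<bullet> b = 1" if "b \<in> B'" for b using B(3) B'(1) that by (simp add: dot_square_norm subset_iff)
  define Q where "Q = (\<Sum>b\<in>B'. outer b b)"
  have Qx: "Q *v x = (\<Sum>b\<in>B'. (b \<bullet> x) *\<^sub>R b)" for x
    by (simp add: Q_def vec_eq_iff matrix_vector_mult_def outer_def sum_distrib_left inner_vec_def sum_distrib_right mult_ac)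
      (subst sum.swap, simp add: mult_ac)
  have Qb: "Q *v c = c" if "c \<in> B'" for c
  proof -
    have "Q *v c = (\<Sum>b\<in>B'. if b = c then c else 0)"
      unfolding Qx using orth that nb by (intro sum.cong) auto
    also have "\<dots> = c" using that B'(3) by simp
    finally show ?thesis .
  qed
  have QQ: "Q ** Q = Q"
  proof (rule matrix_eq[THEN iffD2], intro allI)
    fix x
    have "Q *v (Q *v x) = Q *v (\<Sum>b\<in>B'. (b \<bullet> x) *\<^sub>R b)" by (subst Qx[of x]) (rule refl)
    also have "\<dots> = (\<Sum>b\<in>B'. (b \<bullet> x) *\<^sub>R (Q *v b))"
      by (simp add: linear_sum[OF matrix_vector_mul_linear] matrix_vector_mult_scaleR)
    also have "\<dots> = (\<Sum>b\<in>B'. (b \<bullet> x) *\<^sub>R b)" by (rule sum.cong) (simp_all add: Qb)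
    also have "\<dots> = Q *v x" by (simp only: Qx)
    finally show "(Q ** Q) *v x = Q *v x" by (simp add: matrix_vector_mul_assoc[symmetric])
  qed
  have Qs: "transpose Q = Q"
    by (simp add: Q_def transpose_def vec_eq_iff outer_def mult.commute)
  have YQ: "Y *v (Q *v x) = 0" for x
  proof -
    have "Y *v (Q *v x) = (\<Sum>b\<in>B'. (b \<bullet> x) *\<^sub>R (Y *v b))"
      by (simp add: Qx linear_sum[OF matrix_vector_mul_linear] matrix_vector_mult_scaleR)
    also have "\<dots> = 0" using B(1) B'(1) by (intro sum.neutral) auto
    finally show ?thesis .
  qed
  have rQ: "rank Q = CARD('n) - r"
  proof -
    have "range (\<lambda>x. Q *v x) = span B'"
    proof
      show "range (\<lambda>x. Q *v x) \<subseteq> span B'"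
      proof clarify
        fix x
        show "Q *v x \<in> span B'"
          unfolding Qx by (rule span_sum, rule span_scale, rule span_base, assumption)
      qed
      show "span B' \<subseteq> range (\<lambda>x. Q *v x)"
      proof (rule span_minimal[OF _ subspace_range_mv], rule subsetI)
        fix c assume "c \<in> B'"
        then have "c = Q *v c" using Qb by simp
        then show "c \<in> range (\<lambda>x. Q *v x)" by (rule range_eqI)
      qed
    qed
    moreover have "independent B'" using B(4) B'(1) independent_mono by blast
    ultimately show ?thesis using B'(2) by (simp add: rank_dim_range dim_eq_card_independent)
  qed
  show ?thesis using Qs QQ rQ YQ by (auto simp: grass_proj_def)
qed


lemma bb_mv: "bounded_bilinear (\<lambda>(M::real^'n^'m) (x::real^'n). M *v x)"
proof (rule bounded_bilinear.intro)
  show "\<exists>K. \<forall>(M::real^'n^'m) (x::real^'n). norm (M *v x) \<le> norm M * norm x * K"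
    by (intro exI[of _ 1]) (simp add: norm_mv)
qed (simp_all add: matrix_vector_mult_add_rdistrib matrix_vector_right_distrib scaleR_mv matrix_vector_mult_scaleR)

lemma idem_rank_compl:
  fixes Q :: "real^'n^'n"
  assumes Qi: "Q ** Q = Q"
  shows "rank (mat 1 - Q) + rank Q = CARD('n)"
proof -
  have "range (\<lambda>x. (mat 1 - Q) *v x) = {x. Q *v x = 0}"
  proof
    show "range (\<lambda>x. (mat 1 - Q) *v x) \<subseteq> {x. Q *v x = 0}"
      using proj_idem[OF Qi] by (auto simp: matrix_vector_mult_diff_rdistrib matrix_vector_mult_diff_distrib)
    show "{x. Q *v x = 0} \<subseteq> range (\<lambda>x. (mat 1 - Q) *v x)"
    proof clarify
      fix x assume "Q *v x = 0"
      then have "x = (mat 1 - Q) *v x" by (simp add: matrix_vector_mult_diff_rdistrib)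
      then show "x \<in> range (\<lambda>x. (mat 1 - Q) *v x)" by (rule range_eqI)
    qed
  qed
  then show ?thesis using rank_nullity[of Q] by (simp add: rank_dim_range)
qed

lemma proj_norm_bound:
  fixes Q :: "real^'n^'n"
  assumes "Q \<in> grass_proj k"
  shows "norm Q \<le> real CARD('n)"
proof -
  have Qs: "transpose Q = Q" and Qi: "Q ** Q = Q" using grass_projD[OF assms] by auto
  have row: "Q $ i = Q *v axis i 1" for i
  proof -
    have "Q *v axis i 1 = column i Q" by (rule matrix_vector_mult_basis)
    also have "\<dots> = transpose Q $ i" by (simp add: column_def transpose_def vec_eq_iff)
    finally show ?thesis using Qs by simp
  qed
  have "norm Q = L2_set (\<lambda>i. norm (Q $ i)) UNIV" by (simp add: norm_vec_def)
  also have "\<dots> \<le> (\<Sum>i\<in>UNIV. norm (Q $ i))" by (rule L2_set_le_sum) auto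
  also have "\<dots> \<le> (\<Sum>i\<in>(UNIV::'n set). 1)"
  proof (rule sum_mono)
    fix i :: 'n
    have "norm (Q *v axis i 1) \<le> norm (axis i (1::real))" by (rule proj_norm_le[OF Qs Qi])
    then show "norm (Q $ i) \<le> 1" by (simp add: row)
  qed
  finally show ?thesis by simp
qed

lemma proj_eq_of_fix:
  fixes P Q :: "real^'n^'n"
  assumes Ps: "transpose P = P" and Pi: "P ** P = P" and Qs: "transpose Q = Q" and Qi: "Q ** Q = Q"
    and eq: "{x. P *v x = x} = {x. Q *v x = x}"
  shows "P = Q"
proof -
  have QP: "Q ** P = P"
  proof (rule matrix_eq[THEN iffD2], intro allI)
    fix x
    have "P *v x \<in> {x. P *v x = x}" using proj_idem[OF Pi] by simp
    then have "P *v x \<in> {x. Q *v x = x}" by (simp only: eq)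
    then show "(Q ** P) *v x = P *v x" by (simp add: matrix_vector_mul_assoc[symmetric])
  qed
  have PQ: "P ** Q = Q"
  proof (rule matrix_eq[THEN iffD2], intro allI)
    fix x
    have "Q *v x \<in> {x. Q *v x = x}" using proj_idem[OF Qi] by simp
    then have "Q *v x \<in> {x. P *v x = x}" by (simp only: eq)
    then show "(P ** Q) *v x = Q *v x" by (simp add: matrix_vector_mul_assoc[symmetric])
  qed
  have "P = transpose (Q ** P)" using QP Ps by simp
  also have "\<dots> = transpose P ** transpose Q" by (rule matrix_transpose_mul)
  also have "\<dots> = Q" using Ps Qs PQ by simp
  finally show ?thesis .
qed

lemma nearby_proj:
  fixes X :: "real^'n^'m"
  assumes XP: "(X, P) \<in> desing r" and rn: "r < CARD('n)" and rX: "rank X = r" and e: "e > 0"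
  shows "\<exists>\<delta>>0. \<forall>Y. rank Y \<le> r \<longrightarrow> dist Y X < \<delta> \<longrightarrow> (\<exists>Q. (Y, Q) \<in> desing r \<and> dist Q P < e)"
proof (rule ccontr)
  assume neg: "\<not> ?thesis"
  have "\<forall>k::nat. \<exists>Y. rank Y \<le> r \<and> dist Y X < inverse (real (Suc k)) \<and> (\<forall>Q. (Y, Q) \<in> desing r \<longrightarrow> dist Q P \<ge> e)"
  proof
    fix k :: nat
    have pos: "inverse (real (Suc k)) > 0" by simp
    have all: "\<forall>\<delta>. \<delta> \<le> 0 \<or> (\<exists>Y. rank Y \<le> r \<and> dist Y X < \<delta> \<and> (\<forall>Q. (Y, Q) \<in> desing r \<longrightarrow> e \<le> dist Q P))"
      using neg by (auto simp: not_less)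
    show "\<exists>Y. rank Y \<le> r \<and> dist Y X < inverse (real (Suc k)) \<and> (\<forall>Q. (Y, Q) \<in> desing r \<longrightarrow> dist Q P \<ge> e)"
      using all[rule_format, of "inverse (real (Suc k))"] pos by simp
  qed
  then obtain Y where Y: "\<And>k. rank (Y k) \<le> r" "\<And>k. dist (Y k) X < inverse (real (Suc k))"
    "\<And>k Q. (Y k, Q) \<in> desing r \<Longrightarrow> dist Q P \<ge> e"
    by metis
  have "\<forall>k. \<exists>Q. Q \<in> grass_proj (CARD('n) - r) \<and> (\<forall>x. Y k *v (Q *v x) = 0)"
    using exists_proj_in_ker Y(1) rn by (metis less_imp_le)
  then obtain Q where Q: "\<And>k. Q k \<in> grass_proj (CARD('n) - r)" "\<And>k x. Y k *v (Q k *v x) = 0"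
    by metis
  have Qd: "(Y k, Q k) \<in> desing r" for k using desingI[OF Q(1)] Q(2) by blast
  have QeP: "dist (Q k) P \<ge> e" for k using Y(3)[OF Qd] .
  have "bounded (range Q)"
    unfolding bounded_iff using proj_norm_bound[OF Q(1)] by blast
  then obtain Qi \<sigma> where \<sigma>: "strict_mono \<sigma>" and Ql: "(Q \<circ> \<sigma>) \<longlonglongrightarrow> Qi"
    using bounded_imp_convergent_subsequence by blast
  have Yl0: "Y \<longlonglongrightarrow> X"
  proof -
    have "(\<lambda>k. Y k - X) \<longlonglongrightarrow> 0"
    proof (rule Lim_null_comparison)
      show "eventually (\<lambda>k. norm (Y k - X) \<le> inverse (real (Suc k))) sequentially"
        using Y(2) by (simp add: dist_norm less_imp_le)
      show "(\<lambda>k. inverse (real (Suc k))) \<longlonglongrightarrow> 0" by (rule LIMSEQ_inverse_real_of_nat)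
    qed
    then show ?thesis by (simp add: LIM_zero_iff)
  qed
  have Yl: "(Y \<circ> \<sigma>) \<longlonglongrightarrow> X" by (rule LIMSEQ_subseq_LIMSEQ[OF Yl0 \<sigma>])
  have Qlx: "(\<lambda>k. Q (\<sigma> k) *v x) \<longlonglongrightarrow> Qi *v x" for x
    using tendsto_mv_left[OF Ql] by (simp add: o_def)
  have Qk: "transpose (Q k) = Q k" "Q k ** Q k = Q k" "rank (Q k) = CARD('n) - r" for k
    using grass_projD[OF Q(1)] by auto
  have Qisym: "(Qi *v x) \<bullet> y = x \<bullet> (Qi *v y)" for x y
  proof -
    have l1: "(\<lambda>k. (Q (\<sigma> k) *v x) \<bullet> y) \<longlonglongrightarrow> (Qi *v x) \<bullet> y" by (intro tendsto_intros Qlx)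
    have l2: "(\<lambda>k. x \<bullet> (Q (\<sigma> k) *v y)) \<longlonglongrightarrow> x \<bullet> (Qi *v y)" by (intro tendsto_intros Qlx)
    have "(\<lambda>k. (Q (\<sigma> k) *v x) \<bullet> y) = (\<lambda>k. x \<bullet> (Q (\<sigma> k) *v y))"
      using proj_sym_inner[OF Qk(1)] by simp
    then show ?thesis using l1 l2 LIMSEQ_unique by metis
  qed
  have Qis: "transpose Qi = Qi"
  proof (rule matrix_eq[THEN iffD2], intro allI)
    fix y
    have "(transpose Qi *v y - Qi *v y) \<bullet> x = 0" for x
      using inner_mv_transpose[of y Qi x] Qisym[of x y] by (simp add: inner_diff_left inner_diff_right inner_commute)
    from this[of "transpose Qi *v y - Qi *v y"] show "transpose Qi *v y = Qi *v y" by simp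
  qed
  have Qii: "Qi ** Qi = Qi"
  proof (rule matrix_eq[THEN iffD2], intro allI)
    fix x
    have "(\<lambda>k. Q (\<sigma> k) *v (Q (\<sigma> k) *v x)) \<longlonglongrightarrow> Qi *v (Qi *v x)"
      using bounded_bilinear.tendsto[OF bb_mv, OF Ql[unfolded o_def] Qlx] by simp
    moreover have "(\<lambda>k. Q (\<sigma> k) *v (Q (\<sigma> k) *v x)) = (\<lambda>k. Q (\<sigma> k) *v x)"
      using proj_idem[OF Qk(2)] by simp
    ultimately have "Qi *v (Qi *v x) = Qi *v x" using Qlx LIMSEQ_unique by metis
    then show "(Qi ** Qi) *v x = Qi *v x" by (simp add: matrix_vector_mul_assoc[symmetric])
  qed
  have XQi: "X *v (Qi *v x) = 0" for x
  proof -
    have "(\<lambda>k. Y (\<sigma> k) *v (Q (\<sigma> k) *v x)) \<longlonglongrightarrow> X *v (Qi *v x)"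
      using bounded_bilinear.tendsto[OF bb_mv, OF Yl[unfolded o_def] Qlx] by simp
    moreover have "(\<lambda>k. Y (\<sigma> k) *v (Q (\<sigma> k) *v x)) = (\<lambda>k. 0)" using Q(2) by simp
    ultimately show ?thesis using LIMSEQ_unique tendsto_const by metis
  qed
  obtain d where d: "d > 0" "\<forall>B. norm (B - (mat 1 - Qi)) < d \<longrightarrow> rank (mat 1 - Qi) \<le> rank B"
    using rank_lsc[of "mat 1 - Qi"] by blast
  have "(\<lambda>k. norm (Q (\<sigma> k) - Qi)) \<longlonglongrightarrow> 0"
    using Ql by (simp add: o_def tendsto_norm_zero LIM_zero)
  then have "eventually (\<lambda>k. norm (Q (\<sigma> k) - Qi) < d) sequentially"
    using d(1) by (rule order_tendstoD(2))
  then obtain N where "\<forall>n\<ge>N. norm (Q (\<sigma> n) - Qi) < d" by (auto simp: eventually_sequentially)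
  then obtain k where "norm (Q (\<sigma> k) - Qi) < d" by blast
  then have "norm ((mat 1 - Q (\<sigma> k)) - (mat 1 - Qi)) < d" by (simp add: norm_minus_commute)
  then have "rank (mat 1 - Qi) \<le> rank (mat 1 - Q (\<sigma> k))" using d(2) by blast
  moreover have "rank (mat 1 - Q (\<sigma> k)) = r"
    using idem_rank_compl[OF Qk(2)[of "\<sigma> k"]] Qk(3)[of "\<sigma> k"] rn by simp
  ultimately have "rank (mat 1 - Qi) \<le> r" by simp
  then have rQi: "rank Qi \<ge> CARD('n) - r" using idem_rank_compl[OF Qii] by linarith
  have fixeq: "{x. Qi *v x = x} = {x. P *v x = x}"
  proof -
    have sub: "{x. Qi *v x = x} \<subseteq> {x. X *v x = 0}"
    proof clarify
      fix x assume "Qi *v x = x"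
      then show "X *v x = 0" using XQi[of x] by simp
    qed
    have "dim {x. Qi *v x = x} = rank Qi" using proj_range[OF Qii] rank_dim_range[of Qi] by simp
    moreover have "dim {x. X *v x = 0} = CARD('n) - r" using rank_nullity[of X] rX by simp
    ultimately have "dim {x. X *v x = 0} \<le> dim {x. Qi *v x = x}" using rQi by simp
    then have "{x. Qi *v x = x} = {x. X *v x = 0}"
      using subspace_dim_equal[OF subspace_fix subspace_ker sub] by simp
    then show ?thesis using desing_rank(2)[OF XP rn rX] by simp
  qed
  have P: "P \<in> grass_proj (CARD('n) - r)" using desingD[OF XP] by simp
  have "P = Qi" by (rule proj_eq_of_fix[OF grass_projD(1)[OF P] grass_projD(2)[OF P] Qis Qii fixeq[symmetric]])
  then have "(\<lambda>k. Q (\<sigma> k)) \<longlonglongrightarrow> P" using Ql by (simp add: o_def)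
  then have "eventually (\<lambda>k. dist (Q (\<sigma> k)) P < e) sequentially" using e by (rule tendstoD)
  then obtain N where "\<forall>n\<ge>N. dist (Q (\<sigma> n)) P < e" by (auto simp: eventually_sequentially)
  then obtain k where "dist (Q (\<sigma> k)) P < e" by blast
  then show False using QeP[of "\<sigma> k"] by simp
qed

lemma local_rank_r:
  fixes X :: "real^'n^'m"
  assumes XP: "(X, P) \<in> desing r" and rn: "r < CARD('n)" and rX: "rank X = r"
  shows "local_to_local (desing r) fst (low_rank r) (X, P)"
  unfolding local_to_local_def
proof (intro allI impI)
  fix f :: "real^'n^'m \<Rightarrow> real"
  assume lm: "loc_min_on (desing r) (f \<circ> fst) (X, P)"
  then obtain e where e: "e > 0" "\<forall>z\<in>desing r. dist z (X, P) < e \<longrightarrow> f X \<le> f (fst z)"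
    unfolding loc_min_on_def by auto
  obtain \<delta> where \<delta>: "\<delta> > 0" "\<forall>Y. rank Y \<le> r \<longrightarrow> dist Y X < \<delta> \<longrightarrow> (\<exists>Q. (Y, Q) \<in> desing r \<and> dist Q P < e/2)"
    using nearby_proj[OF XP rn rX, of "e/2"] e(1) by auto
  show "loc_min_on (low_rank r) f (fst (X, P))"
    unfolding loc_min_on_def
  proof (intro conjI exI[of _ "min \<delta> (e/2)"] ballI impI)
    show "fst (X, P) \<in> low_rank r" using rX by (simp add: low_rank_def)
    show "0 < min \<delta> (e/2)" using \<delta>(1) e(1) by simp
    fix Z assume Zr: "Z \<in> low_rank r" and dZ: "dist Z (fst (X, P)) < min \<delta> (e/2)"
    obtain Q where Q: "(Z, Q) \<in> desing r" "dist Q P < e/2"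
      using \<delta>(2) Zr dZ by (auto simp: low_rank_def)
    have "dist (Z, Q) (X, P) = norm (Z - X, Q - P)" by (simp add: dist_norm)
    also have "\<dots> \<le> norm (Z - X) + norm (Q - P)" by (rule norm_Pair_le)
    also have "\<dots> < e" using dZ Q(2) by (simp add: dist_norm)
    finally have "f X \<le> f (fst (Z, Q))" using e(2) Q(1) by blast
    then show "f (fst (X, P)) \<le> f Z" by simp
  qed
qed


theorem proposition2p9:
  fixes r :: nat
  assumes "r < CARD('m)" and "r < CARD('n)"
  shows "(\<forall>y \<in> (desing r :: ((real^'n^'m) \<times> (real^'n^'n)) set).
            local_to_local (desing r) fst (low_rank r) y \<longleftrightarrow> rank (fst y) = r)
       \<and> (\<forall>y \<in> (desing r :: ((real^'n^'m) \<times> (real^'n^'n)) set).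
            one_to_one (desing r) fst (low_rank r) y \<longleftrightarrow> rank (fst y) = r)
       \<and> (\<forall>y \<in> (desing r :: ((real^'n^'m) \<times> (real^'n^'n)) set).
            two_to_one (desing r) fst (low_rank r) y)"
proof (intro conjI ballI)
  fix y :: "(real^'n^'m) \<times> (real^'n^'n)"
  assume yin: "y \<in> desing r"
  obtain X P where y: "y = (X, P)" by (cases y)
  have XP: "(X, P) \<in> desing r" using yin y by simp
  have rle: "rank X \<le> r" by (rule desing_rank(1)[OF XP assms(2)])
  show "local_to_local (desing r) fst (low_rank r) y \<longleftrightarrow> rank (fst y) = r"
  proof (cases "rank X = r")
    case True
    then show ?thesis using local_rank_r[OF XP assms(2) True] y by simp
  next
    case False
    then have "rank X < r" using rle by simp
    then show ?thesis using not_local_low[OF XP assms(2) assms(1)] y False by simp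
  qed
  show "one_to_one (desing r) fst (low_rank r) y \<longleftrightarrow> rank (fst y) = r"
  proof (cases "rank X = r")
    case True
    have "one_to_one (desing r) fst (low_rank r) (X, P)"
      unfolding one_to_one_def using one_to_one_rank_r[OF XP assms(2) True] by simp
    then show ?thesis using True y by simp
  next
    case False
    then have "rank X < r" using rle by simp
    then show ?thesis using not_one_to_one_low[OF XP assms(2) assms(1)] y False by simp
  qed
  show "two_to_one (desing r) fst (low_rank r) y"
    using two_to_one_all[OF XP assms(2)] y by simp
qed

end
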